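(* Let $A_\Gamma$ be a right-angled Artin group. Then the centre $Z(\mathrm{Aut}(A_\Gamma))$ has order at most two. In particular, if $A_\Gamma$ is not free abelian, then $\mathrm{Aut}(A_\Gamma)$ has trivial centre.
   Context: For a finite simplicial graph $\Gamma=(V,E)$, the right-angled Artin group $A_\Gamma$ is the group with presentation $\langle v\in V\mid [v,w]=1 \text{ whenever }(v,w)\in E\rangle$. *)

theory Defs
  imports "HOL-Algebra.Algebra"
begin

text \<open>Letters of words: a generator together with a sign (True = the generator,
False = its inverse).\<close>

definition raag_word :: "'v set \<Rightarrow> ('v \<times> bool) list set" where
  "raag_word V = {w. set w \<subseteq> V \<times> UNIV}"

definition raag_step :: "'v set \<Rightarrow> ('v \<Rightarrow> 'v \<Rightarrow> bool) \<Rightarrow> (('v \<times> bool) list \<times> ('v \<times> bool) list) set" where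
  "raag_step V E =
     {(xs @ [(v,b),(v,\<not>b)] @ ys, xs @ ys) | xs ys v b.
         xs \<in> raag_word V \<and> ys \<in> raag_word V \<and> v \<in> V}
   \<union> {(xs @ [(v,b),(w,c)] @ ys, xs @ [(w,c),(v,b)] @ ys) | xs ys v w b c.
         xs \<in> raag_word V \<and> ys \<in> raag_word V \<and> v \<in> V \<and> w \<in> V \<and> E v w}"

definition raag_eq :: "'v set \<Rightarrow> ('v \<Rightarrow> 'v \<Rightarrow> bool) \<Rightarrow> (('v \<times> bool) list \<times> ('v \<times> bool) list) set" where
  "raag_eq V E = (raag_step V E \<union> (raag_step V E)\<inverse>)\<^sup>*"

definition raag_class :: "'v set \<Rightarrow> ('v \<Rightarrow> 'v \<Rightarrow> bool) \<Rightarrow> ('v \<times> bool) list \<Rightarrow> ('v \<times> bool) list set" where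
  "raag_class V E w = raag_eq V E `` {w}"

text \<open>The right-angled Artin group A_Gamma = < V | [v,w] = 1 for (v,w) in E >,
realised as words over V^{\<plusminus>1} modulo the relations above, with concatenation.\<close>

definition raag_mult :: "'v set \<Rightarrow> ('v \<Rightarrow> 'v \<Rightarrow> bool) \<Rightarrow> ('v \<times> bool) list set \<Rightarrow> ('v \<times> bool) list set \<Rightarrow> ('v \<times> bool) list set" where
  "raag_mult V E P Q = raag_class V E ((SOME p. p \<in> P) @ (SOME q. q \<in> Q))"

definition RAAG :: "'v set \<Rightarrow> ('v \<Rightarrow> 'v \<Rightarrow> bool) \<Rightarrow> ('v \<times> bool) list set monoid" where
  "RAAG V E =
     \<lparr>carrier = raag_class V E ` raag_word V,
      monoid.mult = raag_mult V E,
      monoid.one = raag_class V E []\<rparr>"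

definition group_center :: "('a, 'b) monoid_scheme \<Rightarrow> 'a set" where
  "group_center G = {z \<in> carrier G. \<forall>g \<in> carrier G. z \<otimes>\<^bsub>G\<^esub> g = g \<otimes>\<^bsub>G\<^esub> z}"

definition simplicial_graph :: "'v set \<Rightarrow> ('v \<Rightarrow> 'v \<Rightarrow> bool) \<Rightarrow> bool" where
  "simplicial_graph V E \<longleftrightarrow> finite V \<and> (\<forall>v w. E v w \<longrightarrow> E w v) \<and> (\<forall>v. \<not> E v v)
      \<and> (\<forall>v w. E v w \<longrightarrow> v \<in> V \<and> w \<in> V)"

end

theory Submission
  imports Defs
begin

definition flip :: "'v \<times> bool \<Rightarrow> 'v \<times> bool" where "flip a = (fst a, \<not> snd a)"

lemma flip_flip[simp]: "flip (flip a) = a" by (simp add: flip_def)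
lemma fst_flip[simp]: "fst (flip a) = fst a" by (simp add: flip_def)
lemma flip_neq[simp]: "flip a \<noteq> a" "a \<noteq> flip a" by (auto simp: flip_def prod_eq_iff)
lemma flip_eq_iff: "flip a = b \<longleftrightarrow> a = flip b" by auto

locale sgraph =
  fixes E :: "'v \<Rightarrow> 'v \<Rightarrow> bool"
  assumes Esym: "E v w \<Longrightarrow> E w v" and Eirr: "\<not> E v v"
begin

fun del :: "'v \<times> bool \<Rightarrow> ('v \<times> bool) list \<Rightarrow> ('v \<times> bool) list option" where
  "del l [] = None"
| "del l (m # w) = (if m = flip l then Some w else if E (fst l) (fst m) then map_option (Cons m) (del l w) else None)"

lemma E_neq: "E a b \<Longrightarrow> a \<noteq> b" using Eirr by auto

lemma del_decomp:
  "del l w = Some t \<Longrightarrow> \<exists>w1 w2. w = w1 @ flip l # w2 \<and> t = w1 @ w2 \<and> (\<forall>a\<in>set w1. E (fst l) (fst a))"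
proof (induction w arbitrary: t)
  case Nil then show ?case by simp
next
  case (Cons m w)
  show ?case
  proof (cases "m = flip l")
    case True then show ?thesis using Cons.prems by (intro exI[of _ "[]"] exI[of _ t]) auto
  next
    case False
    with Cons.prems obtain t' where t': "E (fst l) (fst m)" "del l w = Some t'" "t = m # t'"
      by (auto split: if_splits)
    from Cons.IH[OF t'(2)] obtain w1 w2 where "w = w1 @ flip l # w2 \<and> t' = w1 @ w2 \<and> (\<forall>a\<in>set w1. E (fst l) (fst a))" by blast
    then show ?thesis using t' by (intro exI[of _ "m # w1"] exI[of _ w2]) auto
  qed
qed

lemma del_append_comm:
  "(\<forall>a\<in>set w1. E (fst l) (fst a)) \<Longrightarrow> del l (w1 @ w2) = map_option ((@) w1) (del l w2)"
proof (induction w1)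
  case Nil then show ?case by (simp add: option.map_ident)
next
  case (Cons m w1)
  then have "m \<noteq> flip l" using Eirr by (metis fst_flip list.set_intros(1))
  with Cons show ?case by (simp add: option.map_comp comp_def)
qed

lemma del_prefix:
  "(\<forall>a\<in>set w1. E (fst l) (fst a)) \<Longrightarrow> del l (w1 @ flip l # w2) = Some (w1 @ w2)"
  by (simp add: del_append_comm)

lemma del_Cons_comm: "E (fst l) (fst m) \<Longrightarrow> del l (m # w) = map_option (Cons m) (del l w)"
  using Eirr by (auto simp: flip_def prod_eq_iff)

lemma del_diamond:
  assumes "del l w = Some w1" "E (fst l) (fst m)"
  shows "(del m w = None \<longrightarrow> del m w1 = None) \<and>
         (\<forall>w2. del m w = Some w2 \<longrightarrow> (\<exists>w12. del m w1 = Some w12 \<and> del l w2 = Some w12))"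
  using assms
proof (induction w arbitrary: w1)
  case Nil then show ?case by simp
next
  case (Cons a r)
  have Eml: "E (fst m) (fst l)" using Cons.prems(2) Esym by blast
  show ?case
  proof (cases "a = flip l")
    case True
    then have w1: "w1 = r" using Cons.prems by simp
    have "a \<noteq> flip m" using True Eirr Cons.prems(2) by (auto simp: flip_def prod_eq_iff)
    moreover have "E (fst m) (fst a)" using True Eml by simp
    ultimately have dm: "del m (a # r) = map_option (Cons a) (del m r)" by simp
    show ?thesis using dm w1 True by auto
  next
    case False
    with Cons.prems obtain r1 where r1: "E (fst l) (fst a)" "del l r = Some r1" "w1 = a # r1"
      by (auto split: if_splits)
    note IH = Cons.IH[OF r1(2) Cons.prems(2)]
    show ?thesis
    proof (cases "a = flip m")
      case True
      then show ?thesis using r1 False by auto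
    next
      case am: False
      show ?thesis
      proof (cases "E (fst m) (fst a)")
        case True
        then show ?thesis using am r1 IH False by auto
      next
        case nE: False
        then show ?thesis using am r1 by auto
      qed
    qed
  qed
qed

fun reduced :: "('v \<times> bool) list \<Rightarrow> bool" where
  "reduced [] = True"
| "reduced (m # w) = (del m w = None \<and> reduced w)"

definition cp :: "('v \<times> bool) list \<Rightarrow> bool" where
  "cp w \<longleftrightarrow> (\<exists>p a q r. w = p @ a # q @ flip a # r \<and> (\<forall>b\<in>set q. E (fst a) (fst b)))"

lemma del_None_iff: "del m w = None \<longleftrightarrow> \<not> (\<exists>q r. w = q @ flip m # r \<and> (\<forall>b\<in>set q. E (fst m) (fst b)))"
proof
  assume "del m w = None"
  then show "\<not> (\<exists>q r. w = q @ flip m # r \<and> (\<forall>b\<in>set q. E (fst m) (fst b)))"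
    using del_prefix by fastforce
next
  assume "\<not> (\<exists>q r. w = q @ flip m # r \<and> (\<forall>b\<in>set q. E (fst m) (fst b)))"
  then show "del m w = None" using del_decomp by (cases "del m w") blast+
qed

lemma cp_Cons: "cp (m # w) \<longleftrightarrow> (\<exists>q r. w = q @ flip m # r \<and> (\<forall>b\<in>set q. E (fst m) (fst b))) \<or> cp w"
proof
  assume "cp (m # w)"
  then obtain p a q r where h: "m # w = p @ a # q @ flip a # r" "\<forall>b\<in>set q. E (fst a) (fst b)"
    unfolding cp_def by blast
  show "(\<exists>q r. w = q @ flip m # r \<and> (\<forall>b\<in>set q. E (fst m) (fst b))) \<or> cp w"
  proof (cases p)
    case Nil then show ?thesis using h by auto
  next
    case (Cons c p')
    then have "w = p' @ a # q @ flip a # r" using h by simp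
    then have "cp w" unfolding cp_def using h(2) by blast
    then show ?thesis by blast
  qed
next
  assume "(\<exists>q r. w = q @ flip m # r \<and> (\<forall>b\<in>set q. E (fst m) (fst b))) \<or> cp w"
  then show "cp (m # w)"
  proof
    assume "\<exists>q r. w = q @ flip m # r \<and> (\<forall>b\<in>set q. E (fst m) (fst b))"
    then show ?thesis unfolding cp_def by (metis append_Nil)
  next
    assume "cp w"
    then show ?thesis unfolding cp_def by (metis append_Cons)
  qed
qed

lemma reduced_iff_cp: "reduced w \<longleftrightarrow> \<not> cp w"
proof (induction w)
  case Nil then show ?case by (simp add: cp_def)
next
  case (Cons m w) then show ?case by (simp add: cp_Cons del_None_iff)
qed

lemma cp_rev: "cp w \<Longrightarrow> cp (rev w)"
proof -
  assume "cp w"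
  then obtain p a q r where h: "w = p @ a # q @ flip a # r" "\<forall>b\<in>set q. E (fst a) (fst b)"
    unfolding cp_def by blast
  then have "rev w = rev r @ flip a # rev q @ flip (flip a) # rev p" by simp
  then show "cp (rev w)" unfolding cp_def using h(2) by (metis fst_flip set_rev)
qed

lemma reduced_rev[simp]: "reduced (rev w) \<longleftrightarrow> reduced w"
  using cp_rev[of w] cp_rev[of "rev w"] by (auto simp: reduced_iff_cp)

end

context sgraph begin

definition swp :: "(('v \<times> bool) list \<times> ('v \<times> bool) list) set" where
  "swp = {(p @ a # b # q, p @ b # a # q) | p q a b. E (fst a) (fst b)}"

abbreviation sh where "sh \<equiv> swp\<^sup>*"

lemma swpI: "E (fst a) (fst b) \<Longrightarrow> (p @ a # b # q, p @ b # a # q) \<in> swp"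
  unfolding swp_def by blast

lemma swpI0: "E (fst a) (fst b) \<Longrightarrow> (a # b # q, b # a # q) \<in> swp"
  using swpI[of a b "[]"] by simp

lemma swp_sym: "(u, w) \<in> swp \<Longrightarrow> (w, u) \<in> swp"
  unfolding swp_def using Esym by blast

lemma sh_sym: "(u, w) \<in> sh \<Longrightarrow> (w, u) \<in> sh"
proof (induction rule: rtrancl_induct)
  case base then show ?case by simp
next
  case (step y z) then show ?case using swp_sym by (meson converse_rtrancl_into_rtrancl)
qed

lemma swp_app: "(u, w) \<in> swp \<Longrightarrow> (p @ u, p @ w) \<in> swp"
  unfolding swp_def by auto (metis append.assoc)

lemma sh_app: "(u, w) \<in> sh \<Longrightarrow> (p @ u, p @ w) \<in> sh"
proof (induction rule: rtrancl_induct)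
  case base then show ?case by simp
next
  case (step y z) then show ?case using swp_app by (meson rtrancl_into_rtrancl)
qed

lemma sh_Cons: "(u, w) \<in> sh \<Longrightarrow> (m # u, m # w) \<in> sh"
  using sh_app[of u w "[m]"] by simp

lemma swp_length: "(u, w) \<in> swp \<Longrightarrow> length u = length w"
  unfolding swp_def by auto

lemma sh_length: "(u, w) \<in> sh \<Longrightarrow> length u = length w"
  by (induction rule: rtrancl_induct) (auto dest: swp_length)

definition proj :: "'v \<Rightarrow> 'v \<Rightarrow> ('v \<times> bool) list \<Rightarrow> ('v \<times> bool) list" where
  "proj x y w = filter (\<lambda>m. fst m = x \<or> fst m = y) w"

lemma swp_proj: "\<not> E x y \<Longrightarrow> (u, w) \<in> swp \<Longrightarrow> proj x y u = proj x y w"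
  unfolding swp_def proj_def using Eirr Esym by auto

lemma sh_proj: assumes "\<not> E x y" "(u, w) \<in> sh" shows "proj x y u = proj x y w"
  using assms(2) proof (induction rule: rtrancl_induct)
  case base then show ?case by simp
next
  case (step y z) then show ?case using swp_proj[OF assms(1)] by metis
qed

lemma sh_move: "(\<forall>b\<in>set w1. E (fst a) (fst b)) \<Longrightarrow> (a # w1 @ w2, w1 @ a # w2) \<in> sh"
proof (induction w1)
  case Nil then show ?case by simp
next
  case (Cons c w1)
  have "(a # c # w1 @ w2, c # a # w1 @ w2) \<in> swp"
    using Cons.prems by (auto intro!: swpI0)
  moreover have "(c # a # w1 @ w2, c # w1 @ a # w2) \<in> sh"
    using Cons sh_Cons by simp
  ultimately show ?case by (simp add: converse_rtrancl_into_rtrancl)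
qed

definition act :: "'v \<times> bool \<Rightarrow> ('v \<times> bool) list \<Rightarrow> ('v \<times> bool) list" where
  "act l w = (case del l w of None \<Rightarrow> l # w | Some t \<Rightarrow> t)"

definition actw :: "('v \<times> bool) list \<Rightarrow> ('v \<times> bool) list \<Rightarrow> ('v \<times> bool) list" where
  "actw u w = foldr act u w"

lemma actw_simps[simp]: "actw [] w = w" "actw (m # u) w = act m (actw u w)"
  "actw (u1 @ u2) w = actw u1 (actw u2 w)"
  by (simp_all add: actw_def)

lemma del_reduced: "del l w = Some t \<Longrightarrow> reduced w \<Longrightarrow> reduced t"
proof (induction w arbitrary: t)
  case Nil then show ?case by simp
next
  case (Cons a r)
  show ?case
  proof (cases "a = flip l")
    case True then show ?thesis using Cons.prems by simp
  next
    case False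
    with Cons.prems obtain r1 where r1: "E (fst l) (fst a)" "del l r = Some r1" "t = a # r1"
      by (auto split: if_splits)
    have "reduced r1" using Cons r1 by simp
    moreover have "del a r1 = None"
      using del_diamond[OF r1(2) r1(1)] Cons.prems(2) by simp
    ultimately show ?thesis using r1 by simp
  qed
qed

lemma act_reduced: "reduced w \<Longrightarrow> reduced (act l w)"
  unfolding act_def by (cases "del l w") (auto dest: del_reduced)

lemma actw_reduced: "reduced w \<Longrightarrow> reduced (actw u w)"
  by (induction u) (auto intro: act_reduced)

lemma del_swp:
  assumes "(w, w') \<in> swp"
  shows "(del l w = None \<and> del l w' = None) \<or> (\<exists>t t'. del l w = Some t \<and> del l w' = Some t' \<and> (t, t') \<in> sh)"
proof -
  obtain p q a b where h: "w = p @ a # b # q" "w' = p @ b # a # q" "E (fst a) (fst b)"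
    using assms unfolding swp_def by blast
  have ab: "fst a \<noteq> fst b" using h(3) Eirr by auto
  show ?thesis unfolding h(1,2)
  proof (induction p)
    case Nil
    show ?case
    proof (cases "a = flip l")
      case True
      then have "b \<noteq> flip l" using ab by auto
      moreover have "E (fst l) (fst b)" using True h(3) by auto
      ultimately show ?thesis using True by simp
    next
      case af: False
      show ?thesis
      proof (cases "b = flip l")
        case True
        have "E (fst l) (fst a)" using True h(3) Esym by auto
        then show ?thesis using True af by simp
      next
        case bf: False
        show ?thesis
        proof (cases "E (fst l) (fst a) \<and> E (fst l) (fst b)")
          case True
          have "(a # b # x, b # a # x) \<in> sh" for x
            using h(3) by (auto intro!: r_into_rtrancl swpI0)
          then show ?thesis using True af bf by (cases "del l q") auto
        next
          case False
          then show ?thesis using af bf by auto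
        qed
      qed
    qed
  next
    case (Cons c p)
    then show ?case using h(3) by (auto intro: sh_Cons r_into_rtrancl swpI)
  qed
qed

lemma act_swp: "(w, w') \<in> swp \<Longrightarrow> (act l w, act l w') \<in> sh"
proof -
  assume a: "(w, w') \<in> swp"
  then have "(l # w, l # w') \<in> sh" by (intro sh_Cons r_into_rtrancl)
  then show ?thesis using del_swp[OF a, of l] unfolding act_def by auto
qed

lemma act_sh: "(w, w') \<in> sh \<Longrightarrow> (act l w, act l w') \<in> sh"
proof (induction rule: rtrancl_induct)
  case base then show ?case by simp
next
  case (step y z) then show ?case using act_swp rtrancl_trans by metis
qed

lemma actw_sh: "(w, w') \<in> sh \<Longrightarrow> (actw u w, actw u w') \<in> sh"
  by (induction u) (auto intro: act_sh)

lemma act_inv: "reduced s \<Longrightarrow> (act (flip l) (act l s), s) \<in> sh"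
proof (cases "del l s")
  case None
  then show ?thesis unfolding act_def by simp
next
  case (Some t)
  assume red: "reduced s"
  obtain w1 w2 where h: "s = w1 @ flip l # w2" "t = w1 @ w2" "\<forall>a\<in>set w1. E (fst l) (fst a)"
    using del_decomp[OF Some] by blast
  have "del (flip l) t = None"
  proof (rule ccontr)
    assume "del (flip l) t \<noteq> None"
    then obtain t2 where "del (flip l) t = Some t2" by auto
    have "del (flip l) t = map_option ((@) w1) (del (flip l) w2)"
      using h by (simp add: del_append_comm)
    then obtain t3 where d3: "del (flip l) w2 = Some t3" using \<open>del (flip l) t = Some t2\<close>
      by (cases "del (flip l) w2") auto
    have "reduced (flip l # w2)" using red h(1) reduced_iff_cp cp_def
      by (metis append_Cons append_assoc append_Nil)
    with d3 show False by simp
  qed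
  then have "act (flip l) (act l s) = flip l # w1 @ w2" using Some h unfolding act_def by simp
  moreover have "(flip l # w1 @ w2, s) \<in> sh" using h sh_move[of w1 "flip l" w2] by simp
  ultimately show ?thesis by simp
qed

lemma act_comm:
  assumes "E (fst l) (fst m)"
  shows "(act l (act m w), act m (act l w)) \<in> sh"
proof -
  have Eml: "E (fst m) (fst l)" using assms Esym by blast
  have mfl: "m \<noteq> flip l" "l \<noteq> flip m" using assms Eirr by (auto simp: flip_def)
  show ?thesis
  proof (cases "del m w")
    case None
    note mN = None
    show ?thesis
    proof (cases "del l w")
      case None
      have "(l # m # w, m # l # w) \<in> swp" using assms by (auto intro!: swpI0)
      then show ?thesis using mN None assms Eml unfolding act_def
        by (auto simp: del_Cons_comm intro: r_into_rtrancl)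
    next
      case (Some w1)
      have "del m w1 = None" using del_diamond[OF Some Eml[THEN Esym]] mN by simp
      then show ?thesis using mN Some mfl unfolding act_def by (simp add: del_Cons_comm assms)
    qed
  next
    case (Some w2)
    note mS = Some
    show ?thesis
    proof (cases "del l w")
      case None
      have "del l w2 = None" using del_diamond[OF mS Eml] None by simp
      then show ?thesis using mS None mfl unfolding act_def by (simp add: del_Cons_comm Eml)
    next
      case (Some w1)
      obtain w12 where "del m w1 = Some w12" "del l w2 = Some w12"
        using del_diamond[OF Some assms] mS by blast
      then show ?thesis using mS Some unfolding act_def by simp
    qed
  qed
qed

lemma raag_step_actw:
  assumes "(u, u') \<in> raag_step V E" "reduced t"
  shows "(actw u t, actw u' t) \<in> sh"
  using assms(1) unfolding raag_step_def
proof (elim UnE CollectE exE conjE)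
  fix xs ys v b
  assume "(u, u') = (xs @ [(v, b), (v, \<not> b)] @ ys, xs @ ys)"
  then have h: "u = xs @ [(v, b), (v, \<not> b)] @ ys" "u' = xs @ ys" by auto
  have "(v, b) = flip (v, \<not> b)" by (simp add: flip_def)
  then have "(act (v, b) (act (v, \<not> b) (actw ys t)), actw ys t) \<in> sh"
    using act_inv[OF actw_reduced[OF assms(2)], of "(v, \<not> b)" ys] by simp
  then show ?thesis using h actw_sh by simp
next
  fix xs ys v w b c
  assume "(u, u') = (xs @ [(v, b), (w, c)] @ ys, xs @ [(w, c), (v, b)] @ ys)" "E v w"
  then show ?thesis using act_comm[of "(v,b)" "(w,c)"] actw_sh by simp
qed

theorem raag_eq_actw:
  assumes "(u, u') \<in> raag_eq V E" "reduced t"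
  shows "(actw u t, actw u' t) \<in> sh"
  using assms(1) unfolding raag_eq_def
proof (induction rule: rtrancl_induct)
  case base then show ?case by simp
next
  case (step y z)
  then have "(actw y t, actw z t) \<in> sh"
    using raag_step_actw[OF _ assms(2)] sh_sym by blast
  then show ?case using step.IH rtrancl_trans by metis
qed

lemma actw_self: "reduced u \<Longrightarrow> actw u [] = u"
  by (induction u) (auto simp: act_def)

corollary raag_eq_reduced_sh:
  "(u, u') \<in> raag_eq V E \<Longrightarrow> reduced u \<Longrightarrow> reduced u' \<Longrightarrow> (u, u') \<in> sh"
  using raag_eq_actw[of u u' V "[]"] actw_self by simp

end

lemma raag_word_simps[simp]:
  "[] \<in> raag_word V"
  "(a # w) \<in> raag_word V \<longleftrightarrow> fst a \<in> V \<and> w \<in> raag_word V"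
  "(u @ w) \<in> raag_word V \<longleftrightarrow> u \<in> raag_word V \<and> w \<in> raag_word V"
  "rev w \<in> raag_word V \<longleftrightarrow> w \<in> raag_word V"
  by (auto simp: raag_word_def mem_Times_iff)

lemma raag_word_map_flip[simp]: "map flip w \<in> raag_word V \<longleftrightarrow> w \<in> raag_word V"
  by (induction w) auto

lemma raag_step_words: "(a, b) \<in> raag_step V E \<Longrightarrow> a \<in> raag_word V \<and> b \<in> raag_word V"
  unfolding raag_step_def by auto

lemma raag_eq_word: "(a, b) \<in> raag_eq V E \<Longrightarrow> a \<in> raag_word V \<Longrightarrow> b \<in> raag_word V"
  unfolding raag_eq_def
  by (induction rule: rtrancl_induct) (auto dest: raag_step_words)

lemma raag_eq_sym: "(a, b) \<in> raag_eq V E \<Longrightarrow> (b, a) \<in> raag_eq V E"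
  unfolding raag_eq_def by (metis converse_Un converse_converse rtrancl_converseI sup_commute)

lemma raag_eq_trans: "(a, b) \<in> raag_eq V E \<Longrightarrow> (b, c) \<in> raag_eq V E \<Longrightarrow> (a, c) \<in> raag_eq V E"
  unfolding raag_eq_def by (rule rtrancl_trans)

lemma raag_eq_refl[simp]: "(a, a) \<in> raag_eq V E"
  unfolding raag_eq_def by simp

lemma raag_step_eq: "(a, b) \<in> raag_step V E \<Longrightarrow> (a, b) \<in> raag_eq V E"
  unfolding raag_eq_def by auto

lemma raag_step_cong:
  assumes "(a, b) \<in> raag_step V E" "p \<in> raag_word V" "q \<in> raag_word V"
  shows "(p @ a @ q, p @ b @ q) \<in> raag_step V E"
  using assms(1)[unfolded raag_step_def]
proof (elim UnE CollectE exE conjE)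
  fix xs ys v c
  assume h: "(a, b) = (xs @ [(v, c), (v, \<not> c)] @ ys, xs @ ys)" "xs \<in> raag_word V" "ys \<in> raag_word V" "v \<in> V"
  show ?thesis unfolding raag_step_def using h assms
    by (intro UnI1 CollectI exI[of _ "p @ xs"] exI[of _ "ys @ q"] exI[of _ v] exI[of _ c]) simp
next
  fix xs ys v w c d
  assume h: "(a, b) = (xs @ [(v, c), (w, d)] @ ys, xs @ [(w, d), (v, c)] @ ys)" "xs \<in> raag_word V"
     "ys \<in> raag_word V" "v \<in> V" "w \<in> V" "E v w"
  show ?thesis unfolding raag_step_def using h assms
    by (intro UnI2 CollectI exI[of _ "p @ xs"] exI[of _ "ys @ q"] exI[of _ v] exI[of _ w]
           exI[of _ c] exI[of _ d]) simp
qed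

lemma raag_eq_cong:
  assumes "(a, b) \<in> raag_eq V E" "p \<in> raag_word V" "q \<in> raag_word V"
  shows "(p @ a @ q, p @ b @ q) \<in> raag_eq V E"
  using assms(1) unfolding raag_eq_def
proof (induction rule: rtrancl_induct)
  case base then show ?case by simp
next
  case (step y z)
  then have "(p @ y @ q, p @ z @ q) \<in> raag_step V E \<union> (raag_step V E)\<inverse>"
    using raag_step_cong[OF _ assms(2,3)] by blast
  then show ?case using step.IH by (rule rtrancl_into_rtrancl[rotated])
qed

lemma raag_eq_congL: "(a, b) \<in> raag_eq V E \<Longrightarrow> p \<in> raag_word V \<Longrightarrow> (p @ a, p @ b) \<in> raag_eq V E"
  using raag_eq_cong[of a b V E p "[]"] by simp

lemma raag_eq_congR: "(a, b) \<in> raag_eq V E \<Longrightarrow> q \<in> raag_word V \<Longrightarrow> (a @ q, b @ q) \<in> raag_eq V E"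
  using raag_eq_cong[of a b V E "[]" q] by simp

lemma raag_eq_app:
  "(a, b) \<in> raag_eq V E \<Longrightarrow> (c, d) \<in> raag_eq V E \<Longrightarrow> a \<in> raag_word V \<Longrightarrow> d \<in> raag_word V
   \<Longrightarrow> (a @ c, b @ d) \<in> raag_eq V E"
  by (meson raag_eq_congL raag_eq_congR raag_eq_trans raag_eq_sym)

lemma raag_class_eq_iff: "raag_class V E u = raag_class V E w \<longleftrightarrow> (u, w) \<in> raag_eq V E"
proof
  assume "raag_class V E u = raag_class V E w"
  moreover have "w \<in> raag_class V E w" by (simp add: raag_class_def)
  ultimately have "w \<in> raag_class V E u" by simp
  then show "(u, w) \<in> raag_eq V E" by (simp add: raag_class_def)
next
  assume h: "(u, w) \<in> raag_eq V E"
  show "raag_class V E u = raag_class V E w"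
    unfolding raag_class_def using h raag_eq_sym raag_eq_trans by blast
qed

lemma raag_class_mem: "x \<in> raag_class V E w \<longleftrightarrow> (w, x) \<in> raag_eq V E"
  unfolding raag_class_def by auto

lemma raag_mult_class:
  assumes "u \<in> raag_word V" "w \<in> raag_word V"
  shows "raag_mult V E (raag_class V E u) (raag_class V E w) = raag_class V E (u @ w)"
proof -
  let ?p = "SOME p. p \<in> raag_class V E u" and ?q = "SOME q. q \<in> raag_class V E w"
  have p: "(u, ?p) \<in> raag_eq V E" using someI[of "\<lambda>p. p \<in> raag_class V E u" u]
    by (simp add: raag_class_mem)
  have q: "(w, ?q) \<in> raag_eq V E" using someI[of "\<lambda>p. p \<in> raag_class V E w" w]
    by (simp add: raag_class_mem)
  have "(?p @ ?q, u @ w) \<in> raag_eq V E"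
    using raag_eq_app[OF raag_eq_sym[OF p] raag_eq_sym[OF q]] raag_eq_word[OF p] assms by simp
  then show ?thesis unfolding raag_mult_def by (simp add: raag_class_eq_iff)
qed

definition invw :: "('v \<times> bool) list \<Rightarrow> ('v \<times> bool) list" where
  "invw w = rev (map flip w)"

lemma invw_simps[simp]: "invw [] = []" "invw (a # w) = invw w @ [flip a]"
  "invw (invw w) = w" "invw w \<in> raag_word V \<longleftrightarrow> w \<in> raag_word V"
  by (auto simp: invw_def rev_map comp_def)

lemma flip_pair_eq: "([a, flip a], []) \<in> raag_eq V E" if "fst a \<in> V"
proof -
  obtain v b where a: "a = (v, b)" by (cases a)
  have "([] @ [(v, b), (v, \<not> b)] @ [], []) \<in> raag_step V E"
    unfolding raag_step_def using that a
    by (intro UnI1 CollectI exI[of _ "[]"] exI[of _ "[]"] exI[of _ v] exI[of _ b]) simp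
  then show ?thesis using a raag_step_eq by (simp add: flip_def)
qed

lemma invw_right: "w \<in> raag_word V \<Longrightarrow> (w @ invw w, []) \<in> raag_eq V E"
proof (induction w)
  case Nil then show ?case by simp
next
  case (Cons a w)
  have "([a] @ (w @ invw w) @ [flip a], [a] @ [] @ [flip a]) \<in> raag_eq V E"
    using Cons by (intro raag_eq_cong) auto
  moreover have "([a, flip a], []) \<in> raag_eq V E" using flip_pair_eq[of a V E] Cons.prems by simp
  ultimately show ?case using raag_eq_trans by fastforce
qed

lemma invw_left: "w \<in> raag_word V \<Longrightarrow> (invw w @ w, []) \<in> raag_eq V E"
  using invw_right[of "invw w" V E] by simp

lemma carrier_RAAG: "carrier (RAAG V E) = raag_class V E ` raag_word V"
  by (simp add: RAAG_def)

lemma mult_RAAG: "u \<in> raag_word V \<Longrightarrow> w \<in> raag_word V \<Longrightarrow>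
  raag_class V E u \<otimes>\<^bsub>RAAG V E\<^esub> raag_class V E w = raag_class V E (u @ w)"
  by (simp add: RAAG_def raag_mult_class)

lemma one_RAAG: "\<one>\<^bsub>RAAG V E\<^esub> = raag_class V E []"
  by (simp add: RAAG_def)

lemma group_RAAG: "group (RAAG V E)"
proof (rule groupI)
  fix x y assume "x \<in> carrier (RAAG V E)" "y \<in> carrier (RAAG V E)"
  then show "x \<otimes>\<^bsub>RAAG V E\<^esub> y \<in> carrier (RAAG V E)"
    by (auto simp: carrier_RAAG mult_RAAG)
next
  show "\<one>\<^bsub>RAAG V E\<^esub> \<in> carrier (RAAG V E)" by (auto simp: carrier_RAAG one_RAAG)
next
  fix x y z assume "x \<in> carrier (RAAG V E)" "y \<in> carrier (RAAG V E)" "z \<in> carrier (RAAG V E)"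
  then show "x \<otimes>\<^bsub>RAAG V E\<^esub> y \<otimes>\<^bsub>RAAG V E\<^esub> z = x \<otimes>\<^bsub>RAAG V E\<^esub> (y \<otimes>\<^bsub>RAAG V E\<^esub> z)"
    by (auto simp: carrier_RAAG mult_RAAG)
next
  fix x assume "x \<in> carrier (RAAG V E)"
  then show "\<one>\<^bsub>RAAG V E\<^esub> \<otimes>\<^bsub>RAAG V E\<^esub> x = x"
    by (auto simp: carrier_RAAG mult_RAAG one_RAAG)
next
  fix x assume "x \<in> carrier (RAAG V E)"
  then obtain w where w: "w \<in> raag_word V" "x = raag_class V E w" by (auto simp: carrier_RAAG)
  have "raag_class V E (invw w) \<otimes>\<^bsub>RAAG V E\<^esub> x = \<one>\<^bsub>RAAG V E\<^esub>"
    using w invw_left[OF w(1)] by (simp add: mult_RAAG one_RAAG raag_class_eq_iff)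
  moreover have "raag_class V E (invw w) \<in> carrier (RAAG V E)" using w by (simp add: carrier_RAAG)
  ultimately show "\<exists>y\<in>carrier (RAAG V E). y \<otimes>\<^bsub>RAAG V E\<^esub> x = \<one>\<^bsub>RAAG V E\<^esub>" by blast
qed

lemma inv_RAAG: "w \<in> raag_word V \<Longrightarrow> inv\<^bsub>RAAG V E\<^esub> (raag_class V E w) = raag_class V E (invw w)"
  by (rule group.inv_equality[OF group_RAAG])
     (auto simp: mult_RAAG one_RAAG raag_class_eq_iff invw_left carrier_RAAG)


definition evalw :: "('h, 'c) monoid_scheme \<Rightarrow> ('v \<Rightarrow> 'h) \<Rightarrow> ('v \<times> bool) list \<Rightarrow> 'h" where
  "evalw H f w = foldr (\<lambda>a acc. (if snd a then f (fst a) else inv\<^bsub>H\<^esub> f (fst a)) \<otimes>\<^bsub>H\<^esub> acc) w \<one>\<^bsub>H\<^esub>"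

definition rext :: "('h, 'c) monoid_scheme \<Rightarrow> ('v \<Rightarrow> 'h) \<Rightarrow> ('v \<times> bool) list set \<Rightarrow> 'h" where
  "rext H f P = evalw H f (SOME w. w \<in> P)"

definition gen :: "'v set \<Rightarrow> ('v \<Rightarrow> 'v \<Rightarrow> bool) \<Rightarrow> 'v \<Rightarrow> ('v \<times> bool) list set" where
  "gen V E v = raag_class V E [(v, True)]"

lemma evalw_simps[simp]: "evalw H f [] = \<one>\<^bsub>H\<^esub>"
  "evalw H f (a # w) = (if snd a then f (fst a) else inv\<^bsub>H\<^esub> f (fst a)) \<otimes>\<^bsub>H\<^esub> evalw H f w"
  by (simp_all add: evalw_def)

lemma (in group) comm_inv_left:
  assumes "x \<in> carrier G" "y \<in> carrier G" "x \<otimes> y = y \<otimes> x"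
  shows "inv x \<otimes> y = y \<otimes> inv x"
proof -
  have "inv x \<otimes> y = inv x \<otimes> (y \<otimes> x) \<otimes> inv x" using assms(1,2) by (simp add: m_assoc)
  also have "\<dots> = inv x \<otimes> (x \<otimes> y) \<otimes> inv x" using assms(3) by simp
  also have "\<dots> = y \<otimes> inv x" using assms(1,2) by (simp add: m_assoc[symmetric])
  finally show ?thesis .
qed

lemma (in group) comm_inv_both:
  assumes "x \<in> carrier G" "y \<in> carrier G" "x \<otimes> y = y \<otimes> x"
  shows "inv x \<otimes> y = y \<otimes> inv x" "x \<otimes> inv y = inv y \<otimes> x" "inv x \<otimes> inv y = inv y \<otimes> inv x"
proof -
  show 1: "inv x \<otimes> y = y \<otimes> inv x" using comm_inv_left assms by blast
  show 2: "x \<otimes> inv y = inv y \<otimes> x" using comm_inv_left[of y x] assms by simp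
  show "inv x \<otimes> inv y = inv y \<otimes> inv x" using comm_inv_left[of y "inv x"] 1 assms by simp
qed

locale raag_hom =
  fixes V :: "'v set" and E :: "'v \<Rightarrow> 'v \<Rightarrow> bool" and H :: "('h, 'c) monoid_scheme" and f :: "'v \<Rightarrow> 'h"
  assumes H: "group H" and fV: "\<And>v. v \<in> V \<Longrightarrow> f v \<in> carrier H"
    and fE: "\<And>u v. E u v \<Longrightarrow> u \<in> V \<Longrightarrow> v \<in> V \<Longrightarrow> f u \<otimes>\<^bsub>H\<^esub> f v = f v \<otimes>\<^bsub>H\<^esub> f u"
begin

interpretation H: group H by (rule H)

lemma evalw_closed: "w \<in> raag_word V \<Longrightarrow> evalw H f w \<in> carrier H"
  by (induction w) (auto intro: fV)

lemma evalw_append: "u \<in> raag_word V \<Longrightarrow> w \<in> raag_word V \<Longrightarrow> evalw H f (u @ w) = evalw H f u \<otimes>\<^bsub>H\<^esub> evalw H f w"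
  by (induction u) (auto simp: H.m_assoc evalw_closed fV)

lemma evalw_step: "(a, b) \<in> raag_step V E \<Longrightarrow> evalw H f a = evalw H f b"
  unfolding raag_step_def
proof (elim UnE CollectE exE conjE)
  fix xs ys v c
  assume h: "(a, b) = (xs @ [(v, c), (v, \<not> c)] @ ys, xs @ ys)" "xs \<in> raag_word V" "ys \<in> raag_word V" "v \<in> V"
  have "evalw H f ([(v, c), (v, \<not> c)] @ ys) = evalw H f ys"
    using h fV[OF h(4)] evalw_closed[OF h(3)]
    by (cases c) (simp_all add: H.m_assoc[symmetric])
  then show ?thesis using h by (simp add: evalw_append)
next
  fix xs ys v w c d
  assume h: "(a, b) = (xs @ [(v, c), (w, d)] @ ys, xs @ [(w, d), (v, c)] @ ys)" "xs \<in> raag_word V"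
     "ys \<in> raag_word V" "v \<in> V" "w \<in> V" "E v w"
  have c1: "f v \<otimes>\<^bsub>H\<^esub> f w = f w \<otimes>\<^bsub>H\<^esub> f v" using fE h by blast
  let ?x = "if c then f v else inv\<^bsub>H\<^esub> f v" and ?y = "if d then f w else inv\<^bsub>H\<^esub> f w"
  have xy: "?x \<in> carrier H" "?y \<in> carrier H" using fV h by auto
  have "?x \<otimes>\<^bsub>H\<^esub> ?y = ?y \<otimes>\<^bsub>H\<^esub> ?x"
    using c1 fV[OF h(4)] fV[OF h(5)]
    using H.comm_inv_both[OF fV[OF h(4)] fV[OF h(5)] c1] by (cases c; cases d) simp_all
  moreover have "evalw H f ([(v, c), (w, d)] @ ys) = (?x \<otimes>\<^bsub>H\<^esub> ?y) \<otimes>\<^bsub>H\<^esub> evalw H f ys"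
    using xy evalw_closed[OF h(3)] by (simp add: H.m_assoc)
  moreover have "evalw H f ([(w, d), (v, c)] @ ys) = (?y \<otimes>\<^bsub>H\<^esub> ?x) \<otimes>\<^bsub>H\<^esub> evalw H f ys"
    using xy evalw_closed[OF h(3)] by (simp add: H.m_assoc)
  ultimately have "evalw H f ([(v, c), (w, d)] @ ys) = evalw H f ([(w, d), (v, c)] @ ys)"
    by simp
  then show ?thesis using h by (simp add: evalw_append)
qed

lemma evalw_eq: "(a, b) \<in> raag_eq V E \<Longrightarrow> evalw H f a = evalw H f b"
  unfolding raag_eq_def
  by (induction rule: rtrancl_induct) (auto dest: evalw_step)

lemma rext_class: "rext H f (raag_class V E w) = evalw H f w"
proof -
  have "(w, SOME u. u \<in> raag_class V E w) \<in> raag_eq V E"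
    using someI[of "\<lambda>u. u \<in> raag_class V E w" w] by (simp add: raag_class_mem)
  then show ?thesis unfolding rext_def using evalw_eq by metis
qed

lemma rext_hom: "rext H f \<in> hom (RAAG V E) H"
  by (rule homI) (auto simp: carrier_RAAG mult_RAAG rext_class evalw_closed evalw_append)

lemma rext_gen: "v \<in> V \<Longrightarrow> rext H f (gen V E v) = f v"
  using fV by (simp add: gen_def rext_class)

end

lemma gen_carrier: "v \<in> V \<Longrightarrow> gen V E v \<in> carrier (RAAG V E)"
  by (simp add: gen_def carrier_RAAG)

lemma class_neg: "v \<in> V \<Longrightarrow> raag_class V E [(v, False)] = inv\<^bsub>RAAG V E\<^esub> (gen V E v)"
  using inv_RAAG[of "[(v, True)]" V E] by (simp add: gen_def flip_def)

lemma class_Cons: "a \<in> V \<times> UNIV \<Longrightarrow> w \<in> raag_word V \<Longrightarrow>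
   raag_class V E (a # w) = raag_class V E [a] \<otimes>\<^bsub>RAAG V E\<^esub> raag_class V E w"
  by (auto simp: mult_RAAG)

lemma class_letter: "v \<in> V \<Longrightarrow> raag_class V E [(v, b)] = (if b then gen V E v else inv\<^bsub>RAAG V E\<^esub> (gen V E v))"
  by (cases b) (auto simp: gen_def class_neg)

lemma hom_eq_gens:
  assumes H: "group H" and h: "h1 \<in> hom (RAAG V E) H" "h2 \<in> hom (RAAG V E) H"
    and g: "\<And>v. v \<in> V \<Longrightarrow> h1 (gen V E v) = h2 (gen V E v)"
    and x: "x \<in> carrier (RAAG V E)"
  shows "h1 x = h2 x"
proof -
  have gh1: "group_hom (RAAG V E) H h1"
    by (rule group_hom.intro[OF group_RAAG H]) (simp add: group_hom_axioms_def h)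
  have gh2: "group_hom (RAAG V E) H h2"
    by (rule group_hom.intro[OF group_RAAG H]) (simp add: group_hom_axioms_def h)
  obtain w where w: "w \<in> raag_word V" "x = raag_class V E w" using x by (auto simp: carrier_RAAG)
  have "h1 (raag_class V E w) = h2 (raag_class V E w)" using w(1)
  proof (induction w)
    case Nil
    have "h1 \<one>\<^bsub>RAAG V E\<^esub> = h2 \<one>\<^bsub>RAAG V E\<^esub>"
      using group_hom.hom_one[OF gh1] group_hom.hom_one[OF gh2] by simp
    then show ?case by (simp add: one_RAAG)
  next
    case (Cons a w)
    obtain v b where a: "a = (v, b)" by (cases a)
    have v: "v \<in> V" using Cons.prems a by simp
    have wV: "w \<in> raag_word V" using Cons.prems by simp
    have l: "h1 (raag_class V E [a]) = h2 (raag_class V E [a])"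
    proof (cases b)
      case True then show ?thesis using g[OF v] a by (simp add: gen_def)
    next
      case False
      then have "raag_class V E [a] = inv\<^bsub>RAAG V E\<^esub> (gen V E v)" using a class_neg[OF v] by simp
      then show ?thesis using g[OF v] group_hom.hom_inv[OF gh1 gen_carrier[OF v]]
        group_hom.hom_inv[OF gh2 gen_carrier[OF v]] by simp
    qed
    have c1: "raag_class V E [a] \<in> carrier (RAAG V E)" using v a by (auto simp: carrier_RAAG)
    have c2: "raag_class V E w \<in> carrier (RAAG V E)" using wV by (auto simp: carrier_RAAG)
    have eq: "raag_class V E (a # w) = raag_class V E [a] \<otimes>\<^bsub>RAAG V E\<^esub> raag_class V E w"
      using mult_RAAG[of "[a]" V w E] v a wV by simp
    show ?case unfolding eq
      using hom_mult[OF h(1) c1 c2] hom_mult[OF h(2) c1 c2] l Cons.IH[OF wV] by simp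
  qed
  then show ?thesis using w by simp
qed


lemma raag_step_rev:
  assumes "(a, b) \<in> raag_step V E" "\<forall>v w. E v w \<longrightarrow> E w v" shows "(rev a, rev b) \<in> raag_step V E"
  using assms(1)[unfolded raag_step_def] assms(2)
proof (elim UnE CollectE exE conjE)
  fix xs ys v c
  assume h: "(a, b) = (xs @ [(v, c), (v, \<not> c)] @ ys, xs @ ys)" "xs \<in> raag_word V" "ys \<in> raag_word V" "v \<in> V"
  show ?thesis unfolding raag_step_def
    using h by (intro UnI1 CollectI exI[of _ "rev ys"] exI[of _ "rev xs"] exI[of _ v] exI[of _ "\<not> c"]) simp
next
  fix xs ys v w c d
  assume h: "(a, b) = (xs @ [(v, c), (w, d)] @ ys, xs @ [(w, d), (v, c)] @ ys)" "xs \<in> raag_word V"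
     "ys \<in> raag_word V" "v \<in> V" "w \<in> V" "E v w" and s: "\<forall>v w. E v w \<longrightarrow> E w v"
  show ?thesis unfolding raag_step_def
    using h s by (intro UnI2 CollectI exI[of _ "rev ys"] exI[of _ "rev xs"] exI[of _ w] exI[of _ v]
           exI[of _ d] exI[of _ c]) simp
qed

lemma raag_eq_rev: "(a, b) \<in> raag_eq V E \<Longrightarrow> (\<forall>v w. E v w \<longrightarrow> E w v) \<Longrightarrow> (rev a, rev b) \<in> raag_eq V E"
  unfolding raag_eq_def
proof (induction rule: rtrancl_induct)
  case base then show ?case by simp
next
  case (step y z)
  then have "(rev y, rev z) \<in> raag_step V E \<union> (raag_step V E)\<inverse>"
    using raag_step_rev by blast
  then show ?case using step by (meson rtrancl_into_rtrancl)
qed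

lemma Cons_eq_snoc: "c # R = R @ [c] \<Longrightarrow> \<forall>b\<in>set R. b = c"
proof (induction R)
  case Nil then show ?case by simp
next
  case (Cons d R) then show ?case by auto
qed

locale sraag = sgraph E for E :: "'v \<Rightarrow> 'v \<Rightarrow> bool" +
  fixes V :: "'v set"
  assumes EV: "E v w \<Longrightarrow> v \<in> V"
begin

lemma EsymA: "\<forall>v w. E v w \<longrightarrow> E w v" using Esym by blast

lemma raag_move:
  assumes "\<forall>b\<in>set w1. E (fst l) (fst b)" "fst l \<in> V" "w1 \<in> raag_word V" "w2 \<in> raag_word V"
  shows "(l # w1 @ w2, w1 @ l # w2) \<in> raag_eq V E"
  using assms
proof (induction w1)
  case Nil then show ?case by simp
next
  case (Cons c w1)
  obtain v b where l: "l = (v, b)" by (cases l)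
  obtain u d where c: "c = (u, d)" by (cases c)
  have "([] @ [(v, b), (u, d)] @ (w1 @ w2), [] @ [(u, d), (v, b)] @ (w1 @ w2)) \<in> raag_step V E"
    unfolding raag_step_def using Cons.prems l c
    by (intro UnI2 CollectI exI[of _ "[]"] exI[of _ "w1 @ w2"] exI[of _ v] exI[of _ u]
           exI[of _ b] exI[of _ d]) simp
  then have 1: "(l # c # w1 @ w2, c # l # w1 @ w2) \<in> raag_eq V E" using l c raag_step_eq by fastforce
  have "([c] @ (l # w1 @ w2) @ [], [c] @ (w1 @ l # w2) @ []) \<in> raag_eq V E"
    using Cons by (intro raag_eq_cong) auto
  then show ?case using 1 raag_eq_trans by fastforce
qed

lemma act_word: "fst l \<in> V \<Longrightarrow> t \<in> raag_word V \<Longrightarrow> act l t \<in> raag_word V"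
  unfolding act_def by (cases "del l t") (auto dest!: del_decomp)

lemma act_eq: "fst l \<in> V \<Longrightarrow> t \<in> raag_word V \<Longrightarrow> (l # t, act l t) \<in> raag_eq V E"
proof (cases "del l t")
  case None then show ?thesis by (simp add: act_def)
next
  case (Some t')
  assume lV: "fst l \<in> V" and tV: "t \<in> raag_word V"
  obtain w1 w2 where h: "t = w1 @ flip l # w2" "t' = w1 @ w2" "\<forall>a\<in>set w1. E (fst l) (fst a)"
    using del_decomp[OF Some] by blast
  have 1: "(l # w1 @ (flip l # w2), w1 @ l # flip l # w2) \<in> raag_eq V E"
    using raag_move[OF h(3) lV] tV h by simp
  have "(w1 @ [l, flip l] @ w2, w1 @ [] @ w2) \<in> raag_eq V E"
    using flip_pair_eq[OF lV] tV h by (intro raag_eq_cong) auto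
  then show ?thesis using 1 h Some raag_eq_trans unfolding act_def by fastforce
qed

lemma actw_word: "u \<in> raag_word V \<Longrightarrow> actw u [] \<in> raag_word V"
  by (induction u) (auto intro: act_word)

lemma actw_eq: "u \<in> raag_word V \<Longrightarrow> (u, actw u []) \<in> raag_eq V E"
proof (induction u)
  case Nil then show ?case by simp
next
  case (Cons a u)
  have "([a] @ u @ [], [a] @ actw u [] @ []) \<in> raag_eq V E"
    using Cons by (intro raag_eq_cong) auto
  moreover have "(a # actw u [], act a (actw u [])) \<in> raag_eq V E"
    using Cons actw_word by (intro act_eq) auto
  ultimately show ?case using raag_eq_trans by fastforce
qed

lemma reduced_rep: "u \<in> raag_word V \<Longrightarrow> \<exists>w. w \<in> raag_word V \<and> reduced w \<and> (u, w) \<in> raag_eq V E"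
  using actw_word actw_eq actw_reduced[of "[]"] by auto

lemma proj_simps[simp]: "proj x y [] = []" "proj x y (a # w) = (if fst a = x \<or> fst a = y then a # proj x y w else proj x y w)"
  "proj x y (u @ w) = proj x y u @ proj x y w" "proj x y (rev w) = rev (proj x y w)"
  by (simp_all add: proj_def rev_filter)

lemma proj_comm_nil: "\<not> E x y \<Longrightarrow> \<forall>a\<in>set w1. E x (fst a) \<Longrightarrow> proj x y w1 = []"
  unfolding proj_def using Eirr by (induction w1) auto

lemma del_length: "del l w = Some t \<Longrightarrow> length w = Suc (length t)"
  by (auto dest!: del_decomp)

lemma no_comm:
  assumes w: "w \<in> raag_word V" "reduced w" and a: "a \<in> set w" and x: "x \<in> V" "fst a \<noteq> x" "\<not> E (fst a) x"
    and eq: "((x, True) # w, w @ [(x, True)]) \<in> raag_eq V E"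
  shows False
proof -
  define Xl where "Xl = (x, True)"
  define y where "y = fst a"
  have nE: "\<not> E x y" using x Esym unfolding y_def by blast
  have XV: "fst Xl \<in> V" using x by (simp add: Xl_def)
  have eq': "(Xl # w, w @ [Xl]) \<in> raag_eq V E" using eq by (simp add: Xl_def)
  have rw: "rev w \<in> raag_word V" "reduced (rev w)" using w by auto
  have pa: "a \<in> set (proj x y w)" using a by (simp add: proj_def y_def)
  have fX: "fst Xl = x" "fst (flip Xl) = x" by (simp_all add: Xl_def)
  show False
  proof (cases "del Xl w")
    case None
    note N1 = None
    have r1: "reduced (Xl # w)" using N1 w by simp
    show False
    proof (cases "del Xl (rev w)")
      case None
      have "reduced (Xl # rev w)" using None rw by simp
      then have r2: "reduced (w @ [Xl])" using reduced_rev[of "w @ [Xl]"] by simp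
      have "(Xl # w, w @ [Xl]) \<in> sh" using raag_eq_reduced_sh[OF eq' r1 r2] .
      then have "proj x y (Xl # w) = proj x y (w @ [Xl])" by (rule sh_proj[OF nE])
      then have "Xl # proj x y w = proj x y w @ [Xl]" using fX by simp
      then have "\<forall>b\<in>set (proj x y w). b = Xl" by (rule Cons_eq_snoc)
      then have "a = Xl" using pa by (rule bspec)
      then show False using x fX by simp
    next
      case (Some t2)
      have "(Xl # rev w, t2) \<in> raag_eq V E" using act_eq[OF XV rw(1)] Some by (simp add: act_def)
      then have "(rev (Xl # rev w), rev t2) \<in> raag_eq V E" using raag_eq_rev[OF _ EsymA] by blast
      then have e2: "(Xl # w, rev t2) \<in> raag_eq V E" using raag_eq_trans[OF eq'] by simp
      have "reduced (rev t2)" using del_reduced[OF Some rw(2)] by simp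
      then have "(Xl # w, rev t2) \<in> sh" using raag_eq_reduced_sh[OF e2 r1] by simp
      then have "length (Xl # w) = length (rev t2)" by (rule sh_length)
      then show False using del_length[OF Some] by simp
    qed
  next
    case (Some t1)
    note S1 = Some
    have e1: "(Xl # w, t1) \<in> raag_eq V E" using act_eq[OF XV w(1)] S1 by (simp add: act_def)
    have r1: "reduced t1" using del_reduced[OF S1 w(2)] .
    show False
    proof (cases "del Xl (rev w)")
      case None
      have "reduced (Xl # rev w)" using None rw by simp
      then have r2: "reduced (w @ [Xl])" using reduced_rev[of "w @ [Xl]"] by simp
      have e3: "(t1, w @ [Xl]) \<in> raag_eq V E" using raag_eq_trans[OF raag_eq_sym[OF e1] eq'] .
      have "(t1, w @ [Xl]) \<in> sh" using raag_eq_reduced_sh[OF e3 r1 r2] .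
      then have "length t1 = length (w @ [Xl])" by (rule sh_length)
      then show False using del_length[OF S1] by simp
    next
      case (Some t2)
      have "(Xl # rev w, t2) \<in> raag_eq V E" using act_eq[OF XV rw(1)] Some by (simp add: act_def)
      then have "(rev (Xl # rev w), rev t2) \<in> raag_eq V E" using raag_eq_rev[OF _ EsymA] by blast
      then have "(w @ [Xl], rev t2) \<in> raag_eq V E" by simp
      then have e4: "(t1, rev t2) \<in> raag_eq V E" using raag_eq_trans[OF raag_eq_trans[OF raag_eq_sym[OF e1] eq']] by simp
      have "reduced (rev t2)" using del_reduced[OF Some rw(2)] by simp
      then have "(t1, rev t2) \<in> sh" using raag_eq_reduced_sh[OF e4 r1] by simp
      then have pt: "proj x y t1 = rev (proj x y t2)" using sh_proj[OF nE] by simp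
      obtain w1 w2 where d1: "w = w1 @ flip Xl # w2" "t1 = w1 @ w2" "\<forall>a\<in>set w1. E (fst Xl) (fst a)"
        using del_decomp[OF S1] by blast
      obtain w3 w4 where d2: "rev w = w3 @ flip Xl # w4" "t2 = w3 @ w4" "\<forall>a\<in>set w3. E (fst Xl) (fst a)"
        using del_decomp[OF Some] by blast
      have p1: "proj x y w1 = []" "proj x y w3 = []" using proj_comm_nil[OF nE] d1(3) d2(3) fX by auto
      have A: "proj x y w = flip Xl # proj x y t1" using d1 p1 fX by simp
      have "proj x y (rev w) = flip Xl # proj x y t2" unfolding d2(1) d2(2) using p1 fX
        by (simp del: proj_simps(4))
      then have B: "rev (proj x y w) = flip Xl # proj x y t2" by simp
      then have "rev (rev (proj x y w)) = rev (flip Xl # proj x y t2)" by simp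
      then have "proj x y w = rev (proj x y t2) @ [flip Xl]" by simp
      then have "flip Xl # rev (proj x y t2) = rev (proj x y t2) @ [flip Xl]" using A pt by simp
      then have all: "\<forall>b\<in>set (rev (proj x y t2)). b = flip Xl" by (rule Cons_eq_snoc)
      have "a \<in> set (flip Xl # rev (proj x y t2))" using pa A pt by simp
      then have "a = flip Xl" using all by (cases "a = flip Xl") auto
      then have "fst a = x" using fX by simp
      then show False using x by simp
    qed
  qed
qed

end

definition wsum :: "('v \<Rightarrow> int) \<Rightarrow> ('v \<times> bool) list \<Rightarrow> int" where
  "wsum g w = sum_list (map (\<lambda>a. if snd a then g (fst a) else - g (fst a)) w)"

lemma wsum_simps[simp]: "wsum g [] = 0" "wsum g (a # w) = (if snd a then g (fst a) else - g (fst a)) + wsum g w"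
  "wsum g (u @ w) = wsum g u + wsum g w"
  by (simp_all add: wsum_def)

lemma evalw_int: "evalw integer_group g w = wsum g w"
  by (induction w) auto

definition cnt :: "'v \<Rightarrow> ('v \<times> bool) list \<Rightarrow> int" where
  "cnt u w = wsum (\<lambda>v. if v = u then 1 else 0) w"

lemma cnt_simps[simp]: "cnt u [] = 0" "cnt u (a # w) = (if fst a = u then (if snd a then 1 else -1) else 0) + cnt u w"
  by (simp_all add: cnt_def)

lemma cnt_filter: "cnt u (filter (\<lambda>a. fst a \<noteq> v) w) = (if u = v then 0 else cnt u w)"
  by (induction w) auto

definition pw :: "'v \<Rightarrow> int \<Rightarrow> ('v \<times> bool) list" where
  "pw v k = (if k \<ge> 0 then replicate (nat k) (v, True) else replicate (nat (-k)) (v, False))"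

lemma wsum_replicate: "wsum g (replicate n a) = int n * (if snd a then g (fst a) else - g (fst a))"
  by (induction n) (auto simp: algebra_simps)

lemma wsum_pw: "wsum g (pw v k) = k * g v"
  by (auto simp: pw_def wsum_replicate)

lemma cnt_pw: "cnt u (pw v k) = (if u = v then k else 0)"
  by (simp add: cnt_def wsum_pw)

lemma set_pw: "a \<in> set (pw v k) \<Longrightarrow> fst a = v"
  by (auto simp: pw_def split: if_splits)

lemma pw_word[simp]: "v \<in> V \<Longrightarrow> pw v k \<in> raag_word V"
  by (auto simp: pw_def raag_word_def)

lemma replicate_word[simp]: "fst a \<in> V \<Longrightarrow> replicate n a \<in> raag_word V"
  by (auto simp: raag_word_def mem_Times_iff)

lemma pw_zero[simp]: "pw v 0 = []" by (simp add: pw_def)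
lemma pw_one: "pw v 1 = [(v, True)]" by (simp add: pw_def)
lemma pw_mone: "pw v (-1) = [(v, False)]" by (simp add: pw_def)

lemma pw_Cons:
  assumes v: "v \<in> V"
  shows "((v, b) # pw v k, pw v (k + (if b then 1 else -1))) \<in> raag_eq V E"
proof (cases b)
  case True
  show ?thesis
  proof (cases "k \<ge> 0")
    case True
    then have "nat (k + 1) = Suc (nat k)" by simp
    then show ?thesis using True \<open>b\<close> by (simp add: pw_def)
  next
    case False
    then obtain n where n: "nat (-k) = Suc n" by (cases "nat (-k)") auto
    have "([] @ [(v, True), flip (v, True)] @ replicate n (v, False), [] @ [] @ replicate n (v, False)) \<in> raag_eq V E"
      using flip_pair_eq[of "(v, True)" V E] v by (intro raag_eq_cong) auto
    moreover have "pw v (k + 1) = replicate n (v, False)"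
      using False n by (auto simp: pw_def)
    ultimately show ?thesis using False n \<open>b\<close> by (simp add: pw_def flip_def)
  qed
next
  case False
  show ?thesis
  proof (cases "k > 0")
    case True
    then obtain n where n: "nat k = Suc n" by (cases "nat k") auto
    have "([] @ [(v, False), flip (v, False)] @ replicate n (v, True), [] @ [] @ replicate n (v, True)) \<in> raag_eq V E"
      using flip_pair_eq[of "(v, False)" V E] v by (intro raag_eq_cong) auto
    moreover have "pw v (k - 1) = replicate n (v, True)"
      using True n by (auto simp: pw_def)
    ultimately show ?thesis using True n \<open>\<not> b\<close> by (simp add: pw_def flip_def)
  next
    case nk: False
    then have "nat (- (k - 1)) = Suc (nat (-k))" by simp
    then show ?thesis using nk \<open>\<not> b\<close> by (auto simp: pw_def)
  qed
qed

definition cone :: "'v set \<Rightarrow> ('v \<Rightarrow> 'v \<Rightarrow> bool) \<Rightarrow> 'v set" where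
  "cone V E = {c \<in> V. \<forall>d\<in>V. d \<noteq> c \<longrightarrow> E c d}"

context sraag begin

lemma R1:
  assumes "\<forall>a\<in>set w. fst a \<in> cone V E" "v \<in> V"
  shows "(w, pw v (cnt v w) @ filter (\<lambda>a. fst a \<noteq> v) w) \<in> raag_eq V E"
  using assms(1)
proof (induction w)
  case Nil then show ?case by simp
next
  case (Cons a w)
  let ?P = "pw v (cnt v w)" and ?F = "filter (\<lambda>a. fst a \<noteq> v) w"
  have aC: "fst a \<in> cone V E" using Cons.prems by simp
  have aV: "fst a \<in> V" using aC by (simp add: cone_def)
  have wV: "w \<in> raag_word V" using Cons.prems by (auto simp: raag_word_def cone_def mem_Times_iff)
  have FV: "?F \<in> raag_word V" using wV by (auto simp: raag_word_def)
  have 1: "([a] @ w @ [], [a] @ (?P @ ?F) @ []) \<in> raag_eq V E"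
    using Cons aV by (intro raag_eq_cong) auto
  show ?case
  proof (cases "fst a = v")
    case True
    obtain b where a: "a = (v, b)" using True by (cases a) auto
    have "([] @ (a # ?P) @ ?F, [] @ pw v (cnt v w + (if b then 1 else -1)) @ ?F) \<in> raag_eq V E"
      using pw_Cons[OF assms(2), of b "cnt v w"] a FV by (intro raag_eq_cong) auto
    then show ?thesis using 1 a raag_eq_trans by (auto simp: add.commute)
  next
    case False
    have "\<forall>b\<in>set ?P. E (fst a) (fst b)"
      using set_pw aC False assms(2) unfolding cone_def by (metis (mono_tags, lifting) mem_Collect_eq)
    then have "(a # ?P @ ?F, ?P @ a # ?F) \<in> raag_eq V E"
      using raag_move aV assms(2) FV by simp
    then show ?thesis using 1 False raag_eq_trans by simp
  qed
qed

lemma R0: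
  assumes "\<forall>a\<in>set w. fst a \<in> cone V E" "\<forall>u. cnt u w = 0"
  shows "(w, []) \<in> raag_eq V E"
  using assms
proof (induction "length w" arbitrary: w rule: less_induct)
  case less
  show ?case
  proof (cases w)
    case Nil then show ?thesis by simp
  next
    case (Cons a w')
    let ?v = "fst a"
    let ?F = "filter (\<lambda>b. fst b \<noteq> ?v) w"
    have vV: "?v \<in> V" using less.prems Cons by (simp add: cone_def)
    have 1: "(w, ?F) \<in> raag_eq V E" using R1[OF less.prems(1) vV] less.prems(2) by simp
    have "length ?F < length w" using Cons by (simp add: le_imp_less_Suc length_filter_le)
    moreover have "\<forall>b\<in>set ?F. fst b \<in> cone V E" using less.prems by simp
    moreover have "\<forall>u. cnt u ?F = 0" using less.prems(2) by (simp add: cnt_filter)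
    ultimately have "(?F, []) \<in> raag_eq V E" using less.hyps by blast
    then show ?thesis using 1 raag_eq_trans by blast
  qed
qed

end

definition ex :: "'v \<Rightarrow> ('v \<times> bool) list set \<Rightarrow> int" where
  "ex u = rext integer_group (\<lambda>v. if v = u then 1 else 0)"

lemma raag_hom_int: "raag_hom V E integer_group g"
  unfolding raag_hom_def by (auto simp: group_integer_group)

lemma ex_hom: "ex u \<in> hom (RAAG V E) integer_group"
  unfolding ex_def by (rule raag_hom.rext_hom[OF raag_hom_int])

lemma ex_class: "ex u (raag_class V E w) = cnt u w"
  unfolding ex_def by (simp add: raag_hom.rext_class[OF raag_hom_int] evalw_int cnt_def)

lemma hom_evalw:
  assumes H: "group H" and K: "group K" and h: "h \<in> hom H K" and f: "\<And>v. v \<in> V \<Longrightarrow> f v \<in> carrier H"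
    and w: "w \<in> raag_word V"
  shows "h (evalw H f w) = evalw K (h \<circ> f) w"
proof -
  interpret Hg: group H by (rule H)
  have gh: "group_hom H K h" by (rule group_hom.intro[OF H K]) (simp add: group_hom_axioms_def h)
  show ?thesis using w
  proof (induction w)
    case Nil
    then show ?case by (simp add: group_hom.hom_one[OF gh])
  next
    case (Cons a w)
    have fa: "f (fst a) \<in> carrier H" using Cons f by simp
    have ew: "evalw H f w \<in> carrier H"
      using Cons.prems by (induction w) (auto intro: f)
    have la: "(if snd a then f (fst a) else inv\<^bsub>H\<^esub> f (fst a)) \<in> carrier H"
      using fa by auto
    show ?case using Cons hom_mult[OF h la ew] group_hom.hom_inv[OF gh fa] by auto
  qed
qed


lemma carrier_Auto: "carrier (AutoGroup G) = auto G"
  by (simp add: AutoGroup_def BijGroup_def)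

lemma mult_Auto: "f \<in> auto G \<Longrightarrow> g \<in> auto G \<Longrightarrow> f \<otimes>\<^bsub>AutoGroup G\<^esub> g = compose (carrier G) f g"
  by (simp add: AutoGroup_def BijGroup_def auto_def)

lemma one_Auto: "\<one>\<^bsub>AutoGroup G\<^esub> = (\<lambda>x\<in>carrier G. x)"
  by (simp add: AutoGroup_def BijGroup_def)

lemma auto_hom: "f \<in> auto G \<Longrightarrow> f \<in> hom G G" by (simp add: auto_def)
lemma auto_bij: "f \<in> auto G \<Longrightarrow> bij_betw f (carrier G) (carrier G)" by (simp add: auto_def Bij_def)
lemma auto_ext: "f \<in> auto G \<Longrightarrow> f \<in> extensional (carrier G)" by (simp add: auto_def Bij_def)

lemma center_comm:
  assumes "\<phi> \<in> group_center (AutoGroup G)" "\<alpha> \<in> auto G" "x \<in> carrier G"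
  shows "\<phi> (\<alpha> x) = \<alpha> (\<phi> x)"
proof -
  have p: "\<phi> \<in> auto G" using assms(1) by (simp add: group_center_def carrier_Auto)
  have "\<phi> \<otimes>\<^bsub>AutoGroup G\<^esub> \<alpha> = \<alpha> \<otimes>\<^bsub>AutoGroup G\<^esub> \<phi>"
    using assms(1,2) by (simp add: group_center_def carrier_Auto)
  then have "compose (carrier G) \<phi> \<alpha> = compose (carrier G) \<alpha> \<phi>" using p assms(2) by (simp add: mult_Auto)
  then have "compose (carrier G) \<phi> \<alpha> x = compose (carrier G) \<alpha> \<phi> x" by simp
  then show ?thesis using assms(3) by (simp add: compose_def)
qed

lemma center_auto: "\<phi> \<in> group_center (AutoGroup G) \<Longrightarrow> \<phi> \<in> auto G"
  by (simp add: group_center_def carrier_Auto)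

lemma (in group) mk_auto:
  assumes hf: "f \<in> hom G G" and hg: "g \<in> hom G G"
    and gf: "\<And>x. x \<in> carrier G \<Longrightarrow> g (f x) = x" and fg: "\<And>x. x \<in> carrier G \<Longrightarrow> f (g x) = x"
  shows "restrict f (carrier G) \<in> auto G"
proof -
  have "restrict f (carrier G) \<in> hom G G" using hom_restrict[OF hf] by simp
  moreover have "bij_betw f (carrier G) (carrier G)"
    by (rule bij_betwI[where g = g]) (use hf hg gf fg in \<open>auto simp: hom_def\<close>)
  then have "restrict f (carrier G) \<in> Bij (carrier G)"
    by (simp add: Bij_def bij_betw_restrict_eq)
  ultimately show ?thesis by (simp add: auto_def)
qed

lemma (in group) conj_eq_comm:
  assumes "a \<in> carrier G" "b \<in> carrier G" "c \<in> carrier G" "a \<otimes> b \<otimes> inv a = c \<otimes> b \<otimes> inv c"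
  shows "(inv c \<otimes> a) \<otimes> b = b \<otimes> (inv c \<otimes> a)"
proof -
  have "inv c \<otimes> (a \<otimes> b \<otimes> inv a) \<otimes> a = inv c \<otimes> (c \<otimes> b \<otimes> inv c) \<otimes> a" using assms(4) by simp
  moreover have "inv c \<otimes> (a \<otimes> b \<otimes> inv a) \<otimes> a = (inv c \<otimes> a) \<otimes> b"
    using assms(1-3) by (simp add: m_assoc)
  moreover have "inv c \<otimes> (c \<otimes> b \<otimes> inv c) \<otimes> a = b \<otimes> (inv c \<otimes> a)"
    using assms(1-3) by (simp add: m_assoc[symmetric])
  ultimately show ?thesis by simp
qed

lemma (in group) inv_mult_cancel:
  "x \<in> carrier G \<Longrightarrow> y \<in> carrier G \<Longrightarrow> inv x \<otimes> (x \<otimes> y) = y"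
  "x \<in> carrier G \<Longrightarrow> y \<in> carrier G \<Longrightarrow> x \<otimes> (inv x \<otimes> y) = y"
  by (simp_all add: m_assoc[symmetric])

lemma (in group) inner_auto:
  assumes g: "g \<in> carrier G"
  shows "(\<lambda>x\<in>carrier G. g \<otimes> x \<otimes> inv g) \<in> auto G"
proof -
  have h1: "(\<lambda>x. g \<otimes> x \<otimes> inv g) \<in> hom G G"
    by (rule homI) (use g in \<open>auto simp: m_assoc inv_mult_cancel\<close>)
  have h2: "(\<lambda>x. inv g \<otimes> x \<otimes> g) \<in> hom G G"
    by (rule homI) (use g in \<open>auto simp: m_assoc inv_mult_cancel\<close>)
  show ?thesis
    by (rule mk_auto[OF h1 h2]) (use g in \<open>auto simp: m_assoc[symmetric] inv_mult_cancel, auto simp: m_assoc\<close>)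
qed

lemma (in group) center_auto_conj:
  assumes p: "\<phi> \<in> group_center (AutoGroup G)" and g: "g \<in> carrier G" and y: "y \<in> carrier G"
  shows "(inv g \<otimes> \<phi> g) \<otimes> y = y \<otimes> (inv g \<otimes> \<phi> g)"
proof -
  have pa: "\<phi> \<in> auto G" using center_auto[OF p] .
  have ph: "\<phi> \<in> hom G G" using auto_hom[OF pa] .
  interpret ph: group_hom G G \<phi> by (rule group_hom.intro) (auto simp: group_hom_axioms_def ph is_group)
  have "y \<in> \<phi> ` carrier G" using auto_bij[OF pa] y by (simp add: bij_betw_def)
  then obtain x where x: "x \<in> carrier G" "y = \<phi> x" by auto
  have "\<phi> ((\<lambda>x\<in>carrier G. g \<otimes> x \<otimes> inv g) x) = (\<lambda>x\<in>carrier G. g \<otimes> x \<otimes> inv g) (\<phi> x)"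
    using center_comm[OF p inner_auto[OF g] x(1)] .
  then have "\<phi> (g \<otimes> x \<otimes> inv g) = g \<otimes> \<phi> x \<otimes> inv g" using x g by simp
  moreover have "\<phi> (g \<otimes> x \<otimes> inv g) = \<phi> g \<otimes> \<phi> x \<otimes> inv (\<phi> g)" using x g by simp
  ultimately have "\<phi> g \<otimes> \<phi> x \<otimes> inv (\<phi> g) = g \<otimes> \<phi> x \<otimes> inv g" by simp
  then show ?thesis using conj_eq_comm[of "\<phi> g" "\<phi> x" g] x g by simp
qed

lemma auto_restrict_apply: "x \<in> S \<Longrightarrow> restrict f S x = f x" by simp


lemma (in group) comm_mult_right:
  assumes "p \<in> carrier G" "q \<in> carrier G" "r \<in> carrier G" "p \<otimes> q = q \<otimes> p" "p \<otimes> r = r \<otimes> p"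
  shows "p \<otimes> (q \<otimes> r) = (q \<otimes> r) \<otimes> p"
proof -
  have "p \<otimes> (q \<otimes> r) = (p \<otimes> q) \<otimes> r" using assms(1-3) by (simp add: m_assoc)
  also have "\<dots> = (q \<otimes> p) \<otimes> r" using assms(4) by simp
  also have "\<dots> = q \<otimes> (p \<otimes> r)" using assms(1-3) by (simp add: m_assoc)
  also have "\<dots> = q \<otimes> (r \<otimes> p)" using assms(5) by simp
  also have "\<dots> = (q \<otimes> r) \<otimes> p" using assms(1-3) by (simp add: m_assoc)
  finally show ?thesis .
qed

context sraag begin

lemma EV2: "E v w \<Longrightarrow> v \<in> V \<and> w \<in> V" using EV Esym by blast

lemma G: "group (RAAG V E)" by (rule group_RAAG)

lemma gen_comm: "E a b \<Longrightarrow> gen V E a \<otimes>\<^bsub>RAAG V E\<^esub> gen V E b = gen V E b \<otimes>\<^bsub>RAAG V E\<^esub> gen V E a"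
proof -
  assume e: "E a b"
  have ab: "a \<in> V" "b \<in> V" using EV2[OF e] by auto
  have "([] @ [(a, True), (b, True)] @ [], [] @ [(b, True), (a, True)] @ []) \<in> raag_step V E"
    unfolding raag_step_def using e ab
    by (intro UnI2 CollectI exI[of _ "[]"] exI[of _ "[]"] exI[of _ a] exI[of _ b] exI[of _ True] exI[of _ True]) simp
  then have "raag_class V E [(a, True), (b, True)] = raag_class V E [(b, True), (a, True)]"
    using raag_step_eq raag_class_eq_iff by fastforce
  then show ?thesis using ab by (simp add: gen_def mult_RAAG)
qed

lemma gen_central:
  assumes c: "c \<in> cone V E" and x: "x \<in> carrier (RAAG V E)"
  shows "gen V E c \<otimes>\<^bsub>RAAG V E\<^esub> x = x \<otimes>\<^bsub>RAAG V E\<^esub> gen V E c"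
proof -
  interpret G: group "RAAG V E" by (rule G)
  have cV: "c \<in> V" using c by (simp add: cone_def)
  have gc: "gen V E c \<in> carrier (RAAG V E)" using gen_carrier[OF cV] .
  obtain w where w: "w \<in> raag_word V" "x = raag_class V E w" using x by (auto simp: carrier_RAAG)
  have "gen V E c \<otimes>\<^bsub>RAAG V E\<^esub> raag_class V E w = raag_class V E w \<otimes>\<^bsub>RAAG V E\<^esub> gen V E c"
    using w(1)
  proof (induction w)
    case Nil then show ?case using gc by (simp flip: one_RAAG)
  next
    case (Cons a w)
    obtain u b where a: "a = (u, b)" by (cases a)
    have uV: "u \<in> V" and wV: "w \<in> raag_word V" using Cons.prems a by auto
    have gu: "gen V E u \<in> carrier (RAAG V E)" using gen_carrier[OF uV] .
    have cu: "gen V E c \<otimes>\<^bsub>RAAG V E\<^esub> gen V E u = gen V E u \<otimes>\<^bsub>RAAG V E\<^esub> gen V E c"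
    proof (cases "u = c")
      case True then show ?thesis by simp
    next
      case False
      then have "E c u" using c uV by (simp add: cone_def)
      then show ?thesis by (rule gen_comm)
    qed
    have ca: "gen V E c \<otimes>\<^bsub>RAAG V E\<^esub> raag_class V E [a] = raag_class V E [a] \<otimes>\<^bsub>RAAG V E\<^esub> gen V E c"
      using cu G.comm_inv_both[OF gc gu cu] a uV by (simp add: class_letter)
    have c1: "raag_class V E [a] \<in> carrier (RAAG V E)" using uV a by (auto simp: carrier_RAAG)
    have c2: "raag_class V E w \<in> carrier (RAAG V E)" using wV by (auto simp: carrier_RAAG)
    have eq: "raag_class V E (a # w) = raag_class V E [a] \<otimes>\<^bsub>RAAG V E\<^esub> raag_class V E w"
      using mult_RAAG[of "[a]" V w E] uV a wV by simp
    show ?case unfolding eq using G.comm_mult_right[OF gc c1 c2 ca Cons.IH[OF wV]] .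
  qed
  then show ?thesis using w by simp
qed

lemma rext_hom_G: "raag_hom V E (RAAG V E) f \<Longrightarrow> rext (RAAG V E) f \<in> hom (RAAG V E) (RAAG V E)"
  by (rule raag_hom.rext_hom)

lemma id_hom_G: "(\<lambda>x. x) \<in> hom (RAAG V E) (RAAG V E)"
  using id_iso[of "RAAG V E"] by (simp add: iso_def id_def)

lemma auto_from_gens:
  assumes hf: "raag_hom V E (RAAG V E) f" and hg: "raag_hom V E (RAAG V E) g"
    and gf: "\<And>v. v \<in> V \<Longrightarrow> rext (RAAG V E) g (f v) = gen V E v"
    and fg: "\<And>v. v \<in> V \<Longrightarrow> rext (RAAG V E) f (g v) = gen V E v"
  shows "restrict (rext (RAAG V E) f) (carrier (RAAG V E)) \<in> auto (RAAG V E)"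
proof -
  interpret G: group "RAAG V E" by (rule G)
  have Hf: "rext (RAAG V E) f \<in> hom (RAAG V E) (RAAG V E)" by (rule raag_hom.rext_hom[OF hf])
  have Hg: "rext (RAAG V E) g \<in> hom (RAAG V E) (RAAG V E)" by (rule raag_hom.rext_hom[OF hg])
  show ?thesis
  proof (rule G.mk_auto[OF Hf Hg])
    fix x assume x: "x \<in> carrier (RAAG V E)"
    show "rext (RAAG V E) g (rext (RAAG V E) f x) = x"
      using hom_eq_gens[OF G hom_compose[OF Hf Hg] id_hom_G _ x]
        raag_hom.rext_gen[OF hf] gf by simp
  next
    fix x assume x: "x \<in> carrier (RAAG V E)"
    show "rext (RAAG V E) f (rext (RAAG V E) g x) = x"
      using hom_eq_gens[OF G hom_compose[OF Hg Hf] id_hom_G _ x]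
        raag_hom.rext_gen[OF hg] fg by simp
  qed
qed

definition iotaf :: "'v \<Rightarrow> 'v \<Rightarrow> ('v \<times> bool) list set" where
  "iotaf u v = (if v = u then inv\<^bsub>RAAG V E\<^esub> (gen V E v) else gen V E v)"

lemma raag_hom_iota: "raag_hom V E (RAAG V E) (iotaf u)"
proof -
  interpret G: group "RAAG V E" by (rule G)
  show ?thesis
  proof (rule raag_hom.intro)
    show "group (RAAG V E)" by (rule G)
  next
    fix v assume "v \<in> V" then show "iotaf u v \<in> carrier (RAAG V E)"
      using gen_carrier[of v V E] by (auto simp: iotaf_def)
  next
    fix a b assume e: "E a b" "a \<in> V" "b \<in> V"
    have ab: "a \<noteq> b" using e Eirr by auto
    show "iotaf u a \<otimes>\<^bsub>RAAG V E\<^esub> iotaf u b = iotaf u b \<otimes>\<^bsub>RAAG V E\<^esub> iotaf u a"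
      using G.comm_inv_both[OF gen_carrier[OF e(2)] gen_carrier[OF e(3)] gen_comm[OF e(1)]] gen_comm[OF e(1)] ab
      by (auto simp: iotaf_def)
  qed
qed

definition iota :: "'v \<Rightarrow> ('v \<times> bool) list set \<Rightarrow> ('v \<times> bool) list set" where
  "iota u = restrict (rext (RAAG V E) (iotaf u)) (carrier (RAAG V E))"

lemma iota_gen: "v \<in> V \<Longrightarrow> iota u (gen V E v) = iotaf u v"
  using raag_hom.rext_gen[OF raag_hom_iota] by (simp add: iota_def gen_carrier)

lemma iota_auto: "iota u \<in> auto (RAAG V E)"
proof -
  interpret G: group "RAAG V E" by (rule G)
  have ii: "rext (RAAG V E) (iotaf u) (iotaf u v) = gen V E v" if v: "v \<in> V" for v
  proof -
    interpret gh: group_hom "RAAG V E" "RAAG V E" "rext (RAAG V E) (iotaf u)"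
      by (rule group_hom.intro[OF G G]) (simp add: group_hom_axioms_def raag_hom.rext_hom[OF raag_hom_iota])
    show ?thesis using v raag_hom.rext_gen[OF raag_hom_iota] gen_carrier[OF v]
      by (auto simp: iotaf_def)
  qed
  show ?thesis unfolding iota_def
    using auto_from_gens[OF raag_hom_iota raag_hom_iota ii ii] .
qed

lemma iota_hom: "iota u \<in> hom (RAAG V E) (RAAG V E)"
  using iota_auto auto_hom by blast

lemma ex_gen: "v \<in> V \<Longrightarrow> ex u (gen V E v) = (if v = u then 1 else 0)"
  by (simp add: gen_def ex_class)

lemma wsum_neg_ind: "wsum (\<lambda>v. if v = u then -1 else 0) w = - cnt u w"
  by (induction w) auto

lemma ex_iota:
  assumes x: "x \<in> carrier (RAAG V E)"
  shows "ex u (iota u x) = - ex u x"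
proof -
  have h1: "ex u \<circ> iota u \<in> hom (RAAG V E) integer_group" by (rule hom_compose[OF iota_hom ex_hom])
  have h2: "rext integer_group (\<lambda>v. if v = u then -1 else 0) \<in> hom (RAAG V E) integer_group"
    by (rule raag_hom.rext_hom[OF raag_hom_int])
  have "(ex u \<circ> iota u) x = rext integer_group (\<lambda>v. if v = u then -1 else 0) x"
  proof (rule hom_eq_gens[OF group_integer_group h1 h2 _ x])
    fix v assume v: "v \<in> V"
    interpret exh: group_hom "RAAG V E" integer_group "ex u"
      by (rule group_hom.intro[OF G group_integer_group]) (simp add: group_hom_axioms_def ex_hom)
    show "(ex u \<circ> iota u) (gen V E v) = rext integer_group (\<lambda>v. if v = u then -1 else 0) (gen V E v)"
      using v iota_gen[OF v] raag_hom.rext_gen[OF raag_hom_int v] gen_carrier[OF v] ex_gen[OF v]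
      by (auto simp: iotaf_def)
  qed
  moreover obtain w where w: "w \<in> raag_word V" "x = raag_class V E w" using x by (auto simp: carrier_RAAG)
  ultimately show ?thesis
    by (simp add: raag_hom.rext_class[OF raag_hom_int] evalw_int wsum_neg_ind ex_class)
qed


definition tauf :: "'v \<Rightarrow> 'v \<Rightarrow> 'v \<Rightarrow> ('v \<times> bool) list set" where
  "tauf x c v = (if v = x then gen V E x \<otimes>\<^bsub>RAAG V E\<^esub> gen V E c else gen V E v)"

definition taug :: "'v \<Rightarrow> 'v \<Rightarrow> 'v \<Rightarrow> ('v \<times> bool) list set" where
  "taug x c v = (if v = x then gen V E x \<otimes>\<^bsub>RAAG V E\<^esub> inv\<^bsub>RAAG V E\<^esub> gen V E c else gen V E v)"

lemma raag_hom_tau: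
  assumes x: "x \<in> V" and c: "c \<in> cone V E" and xc: "x \<noteq> c"
  shows "raag_hom V E (RAAG V E) (tauf x c)" "raag_hom V E (RAAG V E) (taug x c)"
proof -
  interpret G: group "RAAG V E" by (rule G)
  have cV: "c \<in> V" using c by (simp add: cone_def)
  have gx: "gen V E x \<in> carrier (RAAG V E)" and gc: "gen V E c \<in> carrier (RAAG V E)"
    by (simp_all add: gen_carrier x cV)
  have key: "gen V E b \<otimes>\<^bsub>RAAG V E\<^esub> (gen V E x \<otimes>\<^bsub>RAAG V E\<^esub> d) = (gen V E x \<otimes>\<^bsub>RAAG V E\<^esub> d) \<otimes>\<^bsub>RAAG V E\<^esub> gen V E b"
    if b: "E b x" "b \<in> V" and d: "d = gen V E c \<or> d = inv\<^bsub>RAAG V E\<^esub> gen V E c" for b d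
  proof -
    have gb: "gen V E b \<in> carrier (RAAG V E)" using gen_carrier[OF b(2)] .
    have dC: "d \<in> carrier (RAAG V E)" using d gc by auto
    have 1: "gen V E b \<otimes>\<^bsub>RAAG V E\<^esub> gen V E x = gen V E x \<otimes>\<^bsub>RAAG V E\<^esub> gen V E b"
      using gen_comm[OF b(1)] .
    have cb: "gen V E c \<otimes>\<^bsub>RAAG V E\<^esub> gen V E b = gen V E b \<otimes>\<^bsub>RAAG V E\<^esub> gen V E c"
      using gen_central[OF c gb] .
    have 2: "gen V E b \<otimes>\<^bsub>RAAG V E\<^esub> d = d \<otimes>\<^bsub>RAAG V E\<^esub> gen V E b"
      using d cb G.comm_inv_both(1)[OF gc gb cb] by auto
    show ?thesis by (rule G.comm_mult_right[OF gb gx dC 1 2])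
  qed
  have fE: "(if a = x then gen V E x \<otimes>\<^bsub>RAAG V E\<^esub> d else gen V E a) \<otimes>\<^bsub>RAAG V E\<^esub> (if b = x then gen V E x \<otimes>\<^bsub>RAAG V E\<^esub> d else gen V E b)
     = (if b = x then gen V E x \<otimes>\<^bsub>RAAG V E\<^esub> d else gen V E b) \<otimes>\<^bsub>RAAG V E\<^esub> (if a = x then gen V E x \<otimes>\<^bsub>RAAG V E\<^esub> d else gen V E a)"
    if d: "d = gen V E c \<or> d = inv\<^bsub>RAAG V E\<^esub> gen V E c" and e: "E a b" "a \<in> V" "b \<in> V" for d a b
  proof -
    have ab: "a \<noteq> b" using e Eirr by auto
    show ?thesis
    proof (cases "a = x")
      case True
      then have "b \<noteq> x" using ab by simp
      then show ?thesis using key[of b d] True e Esym d by auto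
    next
      case False
      show ?thesis
      proof (cases "b = x")
        case True
        then show ?thesis using key[of a d] False e d by auto
      next
        case nb: False
        then show ?thesis using False gen_comm[OF e(1)] by auto
      qed
    qed
  qed
  show "raag_hom V E (RAAG V E) (tauf x c)"
  proof (rule raag_hom.intro)
    show "group (RAAG V E)" by (rule G)
  next
    fix v assume "v \<in> V" then show "tauf x c v \<in> carrier (RAAG V E)"
      using gen_carrier[of v V E] gx gc by (auto simp: tauf_def)
  next
    fix a b assume "E a b" "a \<in> V" "b \<in> V" then show "tauf x c a \<otimes>\<^bsub>RAAG V E\<^esub> tauf x c b = tauf x c b \<otimes>\<^bsub>RAAG V E\<^esub> tauf x c a"
      using fE[of "gen V E c" a b] unfolding tauf_def by blast
  qed
  show "raag_hom V E (RAAG V E) (taug x c)"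
  proof (rule raag_hom.intro)
    show "group (RAAG V E)" by (rule G)
  next
    fix v assume "v \<in> V" then show "taug x c v \<in> carrier (RAAG V E)"
      using gen_carrier[of v V E] gx gc by (auto simp: taug_def)
  next
    fix a b assume "E a b" "a \<in> V" "b \<in> V" then show "taug x c a \<otimes>\<^bsub>RAAG V E\<^esub> taug x c b = taug x c b \<otimes>\<^bsub>RAAG V E\<^esub> taug x c a"
      using fE[of "inv\<^bsub>RAAG V E\<^esub> gen V E c" a b] unfolding taug_def by blast
  qed
qed

definition tau :: "'v \<Rightarrow> 'v \<Rightarrow> ('v \<times> bool) list set \<Rightarrow> ('v \<times> bool) list set" where
  "tau x c = restrict (rext (RAAG V E) (tauf x c)) (carrier (RAAG V E))"

lemma tau_gen: "x \<in> V \<Longrightarrow> c \<in> cone V E \<Longrightarrow> x \<noteq> c \<Longrightarrow> v \<in> V \<Longrightarrow> tau x c (gen V E v) = tauf x c v"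
  using raag_hom.rext_gen[OF raag_hom_tau(1)] by (simp add: tau_def gen_carrier)

lemma tau_auto:
  assumes x: "x \<in> V" and c: "c \<in> cone V E" and xc: "x \<noteq> c"
  shows "tau x c \<in> auto (RAAG V E)"
proof -
  interpret G: group "RAAG V E" by (rule G)
  have cV: "c \<in> V" using c by (simp add: cone_def)
  note hf = raag_hom_tau(1)[OF x c xc] and hg = raag_hom_tau(2)[OF x c xc]
  interpret F: group_hom "RAAG V E" "RAAG V E" "rext (RAAG V E) (tauf x c)"
    by (rule group_hom.intro[OF G G]) (simp add: group_hom_axioms_def raag_hom.rext_hom[OF hf])
  interpret Gh: group_hom "RAAG V E" "RAAG V E" "rext (RAAG V E) (taug x c)"
    by (rule group_hom.intro[OF G G]) (simp add: group_hom_axioms_def raag_hom.rext_hom[OF hg])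
  have gx: "gen V E x \<in> carrier (RAAG V E)" and gc: "gen V E c \<in> carrier (RAAG V E)"
    by (simp_all add: gen_carrier x cV)
  have gf: "rext (RAAG V E) (taug x c) (tauf x c v) = gen V E v" if v: "v \<in> V" for v
  proof (cases "v = x")
    case True
    have "rext (RAAG V E) (taug x c) (gen V E x \<otimes>\<^bsub>RAAG V E\<^esub> gen V E c)
        = (gen V E x \<otimes>\<^bsub>RAAG V E\<^esub> inv\<^bsub>RAAG V E\<^esub> gen V E c) \<otimes>\<^bsub>RAAG V E\<^esub> gen V E c"
      using Gh.hom_mult[OF gx gc] raag_hom.rext_gen[OF hg x] raag_hom.rext_gen[OF hg cV] xc
      by (simp add: taug_def)
    also have "\<dots> = gen V E x" using gx gc by (simp add: G.m_assoc)
    finally show ?thesis using True by (simp add: tauf_def)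
  next
    case False
    then show ?thesis using raag_hom.rext_gen[OF hg v] by (simp add: tauf_def taug_def)
  qed
  have fg: "rext (RAAG V E) (tauf x c) (taug x c v) = gen V E v" if v: "v \<in> V" for v
  proof (cases "v = x")
    case True
    have "rext (RAAG V E) (tauf x c) (gen V E x \<otimes>\<^bsub>RAAG V E\<^esub> inv\<^bsub>RAAG V E\<^esub> gen V E c)
        = (gen V E x \<otimes>\<^bsub>RAAG V E\<^esub> gen V E c) \<otimes>\<^bsub>RAAG V E\<^esub> inv\<^bsub>RAAG V E\<^esub> gen V E c"
      using F.hom_mult[OF gx G.inv_closed[OF gc]] F.hom_inv[OF gc] raag_hom.rext_gen[OF hf x]
        raag_hom.rext_gen[OF hf cV] xc
      by (simp add: tauf_def)
    also have "\<dots> = gen V E x" using gx gc by (simp add: G.m_assoc)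
    finally show ?thesis using True by (simp add: taug_def)
  next
    case False
    then show ?thesis using raag_hom.rext_gen[OF hf v] by (simp add: tauf_def taug_def)
  qed
  show ?thesis unfolding tau_def using auto_from_gens[OF hf hg gf fg] .
qed

lemma ex_hom_sum: "(\<lambda>y. ex c y + ex x y) \<in> hom (RAAG V E) integer_group"
  by (rule homI) (auto simp: hom_mult[OF ex_hom])

lemma ex_tau:
  assumes x: "x \<in> V" and c: "c \<in> cone V E" and xc: "x \<noteq> c" and y: "y \<in> carrier (RAAG V E)"
  shows "ex c (tau x c y) = ex c y + ex x y"
proof -
  have cV: "c \<in> V" using c by (simp add: cone_def)
  have th: "tau x c \<in> hom (RAAG V E) (RAAG V E)" using tau_auto[OF x c xc] auto_hom by blast
  have "(ex c \<circ> tau x c) y = ex c y + ex x y"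
  proof (rule hom_eq_gens[OF group_integer_group hom_compose[OF th ex_hom] ex_hom_sum _ y])
    fix v assume v: "v \<in> V"
    have gx: "gen V E x \<in> carrier (RAAG V E)" and gc: "gen V E c \<in> carrier (RAAG V E)"
      by (simp_all add: gen_carrier x cV)
    show "(ex c \<circ> tau x c) (gen V E v) = ex c (gen V E v) + ex x (gen V E v)"
      using tau_gen[OF x c xc v] hom_mult[OF ex_hom gx gc] ex_gen v x cV xc
      by (auto simp: tauf_def)
  qed
  then show ?thesis by simp
qed
end

context sraag begin

lemma center_cone:
  assumes z: "z \<in> carrier (RAAG V E)" and c: "\<forall>g\<in>carrier (RAAG V E). z \<otimes>\<^bsub>RAAG V E\<^esub> g = g \<otimes>\<^bsub>RAAG V E\<^esub> z"
  shows "\<exists>w. w \<in> raag_word V \<and> z = raag_class V E w \<and> (\<forall>a\<in>set w. fst a \<in> cone V E)"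
proof -
  obtain u where u: "u \<in> raag_word V" "z = raag_class V E u" using z by (auto simp: carrier_RAAG)
  obtain w where w: "w \<in> raag_word V" "reduced w" "(u, w) \<in> raag_eq V E" using reduced_rep[OF u(1)] by blast
  have zw: "z = raag_class V E w" unfolding u(2) raag_class_eq_iff using w(3) .
  have "fst a \<in> cone V E" if a: "a \<in> set w" for a
  proof -
    have aV: "fst a \<in> V" using w(1) a by (auto simp: raag_word_def)
    have "E (fst a) d" if d: "d \<in> V" "d \<noteq> fst a" for d
    proof (rule ccontr)
      assume nE: "\<not> E (fst a) d"
      have "z \<otimes>\<^bsub>RAAG V E\<^esub> gen V E d = gen V E d \<otimes>\<^bsub>RAAG V E\<^esub> z" using c gen_carrier[OF d(1)] by blast
      then have "raag_class V E (w @ [(d, True)]) = raag_class V E ([(d, True)] @ w)"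
        using zw w(1) d(1) by (simp add: gen_def mult_RAAG)
      then have "(w @ [(d, True)], [(d, True)] @ w) \<in> raag_eq V E"
        by (simp only: raag_class_eq_iff)
      then have "((d, True) # w, w @ [(d, True)]) \<in> raag_eq V E"
        using raag_eq_sym by simp
      then show False using no_comm[OF w(1) w(2) a d(1) _ nE] d(2) by auto
    qed
    then show ?thesis using aV by (auto simp: cone_def)
  qed
  then show ?thesis using zw w(1) by blast
qed

lemma cnt_nomem: "\<forall>a\<in>set w. fst a \<noteq> u \<Longrightarrow> cnt u w = 0"
  by (induction w) auto

lemma gen_pw: "v \<in> V \<Longrightarrow> raag_class V E (pw v 1) = gen V E v"
  by (simp add: pw_one gen_def)

lemma zv_form:
  assumes p: "\<phi> \<in> group_center (AutoGroup (RAAG V E))" and v: "v \<in> V"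
  shows "\<exists>m. \<phi> (gen V E v) = raag_class V E (pw v m) \<and> (v \<notin> cone V E \<longrightarrow> m = 1)"
proof -
  interpret G: group "RAAG V E" by (rule G)
  have pa: "\<phi> \<in> auto (RAAG V E)" using center_auto[OF p] .
  interpret ph: group_hom "RAAG V E" "RAAG V E" \<phi>
    by (rule group_hom.intro[OF G G]) (simp add: group_hom_axioms_def auto_hom[OF pa])
  have gv: "gen V E v \<in> carrier (RAAG V E)" using gen_carrier[OF v] .
  have pv: "\<phi> (gen V E v) \<in> carrier (RAAG V E)" using gv by simp
  define z where "z = inv\<^bsub>RAAG V E\<^esub> gen V E v \<otimes>\<^bsub>RAAG V E\<^esub> \<phi> (gen V E v)"
  have zc: "z \<in> carrier (RAAG V E)" using gv pv by (simp add: z_def)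
  have zcent: "\<forall>g\<in>carrier (RAAG V E). z \<otimes>\<^bsub>RAAG V E\<^esub> g = g \<otimes>\<^bsub>RAAG V E\<^esub> z"
    using G.center_auto_conj[OF p gv] by (simp add: z_def)
  obtain w where w: "w \<in> raag_word V" "z = raag_class V E w" "\<forall>a\<in>set w. fst a \<in> cone V E"
    using center_cone[OF zc zcent] by blast
  have cnt0: "cnt u w = 0" if u: "u \<noteq> v" for u
  proof (cases "u \<in> V")
    case False
    then show ?thesis using w(1) by (intro cnt_nomem) (auto simp: raag_word_def)
  next
    case True
    interpret io: group_hom "RAAG V E" "RAAG V E" "iota u"
      by (rule group_hom.intro[OF G G]) (simp add: group_hom_axioms_def iota_hom)
    have i1: "iota u (gen V E v) = gen V E v" using iota_gen[OF v] u by (simp add: iotaf_def)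
    have "iota u (\<phi> (gen V E v)) = \<phi> (iota u (gen V E v))"
      using center_comm[OF p iota_auto gv] by simp
    then have i2: "iota u (\<phi> (gen V E v)) = \<phi> (gen V E v)" using i1 by simp
    have "iota u z = z" using i1 i2 gv pv by (simp add: z_def)
    then have "ex u z = - ex u z" using ex_iota[OF zc, of u] by simp
    then have "ex u z = 0" by simp
    then show ?thesis using w(2) by (simp add: ex_class)
  qed
  let ?F = "filter (\<lambda>a. fst a \<noteq> v) w"
  have 1: "(w, pw v (cnt v w) @ ?F) \<in> raag_eq V E" using R1[OF w(3) v] .
  have "(?F, []) \<in> raag_eq V E" using w(3) cnt0 by (intro R0) (auto simp: cnt_filter)
  then have "(pw v (cnt v w) @ ?F, pw v (cnt v w) @ []) \<in> raag_eq V E"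
    using v by (intro raag_eq_congL) auto
  then have "(w, pw v (cnt v w)) \<in> raag_eq V E" using raag_eq_trans[OF 1] by simp
  then have zk: "z = raag_class V E (pw v (cnt v w))" unfolding w(2) raag_class_eq_iff .
  have "\<phi> (gen V E v) = gen V E v \<otimes>\<^bsub>RAAG V E\<^esub> z"
    using gv pv by (simp add: z_def G.inv_mult_cancel)
  also have "\<dots> = raag_class V E ((v, True) # pw v (cnt v w))"
    using zk v by (simp add: gen_def mult_RAAG)
  also have "\<dots> = raag_class V E (pw v (cnt v w + 1))"
    using pw_Cons[OF v, of True "cnt v w" E] unfolding raag_class_eq_iff by (simp add: add.commute)
  finally have fin: "\<phi> (gen V E v) = raag_class V E (pw v (cnt v w + 1))" .
  have "v \<notin> cone V E \<longrightarrow> cnt v w = 0" using w(3) by (auto intro: cnt_nomem)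
  then show ?thesis using fin by auto
qed

lemma auto_eq_id:
  assumes pa: "\<phi> \<in> auto (RAAG V E)" and g: "\<And>v. v \<in> V \<Longrightarrow> \<phi> (gen V E v) = gen V E v"
  shows "\<phi> = (\<lambda>x\<in>carrier (RAAG V E). x)"
proof
  fix x
  show "\<phi> x = (\<lambda>x\<in>carrier (RAAG V E). x) x"
  proof (cases "x \<in> carrier (RAAG V E)")
    case True
    then show ?thesis using hom_eq_gens[OF G auto_hom[OF pa] id_hom_G g True] by simp
  next
    case False
    then show ?thesis using auto_ext[OF pa] by (simp add: extensional_def)
  qed
qed

theorem center_noncomplete:
  assumes x: "x \<in> V" "x \<notin> cone V E"
  shows "group_center (AutoGroup (RAAG V E)) = {\<one>\<^bsub>AutoGroup (RAAG V E)\<^esub>}"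
proof
  interpret G: group "RAAG V E" by (rule G)
  interpret A: group "AutoGroup (RAAG V E)" by (rule G.AutoGroup)
  show "{\<one>\<^bsub>AutoGroup (RAAG V E)\<^esub>} \<subseteq> group_center (AutoGroup (RAAG V E))"
  proof -
    have "\<forall>g\<in>carrier (AutoGroup (RAAG V E)). \<one>\<^bsub>AutoGroup (RAAG V E)\<^esub> \<otimes>\<^bsub>AutoGroup (RAAG V E)\<^esub> g = g \<otimes>\<^bsub>AutoGroup (RAAG V E)\<^esub> \<one>\<^bsub>AutoGroup (RAAG V E)\<^esub>"
      by simp
    then show ?thesis unfolding group_center_def by simp
  qed
  show "group_center (AutoGroup (RAAG V E)) \<subseteq> {\<one>\<^bsub>AutoGroup (RAAG V E)\<^esub>}"
  proof
    fix \<phi> assume p: "\<phi> \<in> group_center (AutoGroup (RAAG V E))"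
    have pa: "\<phi> \<in> auto (RAAG V E)" using center_auto[OF p] .
    interpret ph: group_hom "RAAG V E" "RAAG V E" \<phi>
      by (rule group_hom.intro[OF G G]) (simp add: group_hom_axioms_def auto_hom[OF pa])
    have nc: "\<phi> (gen V E v) = gen V E v" if v: "v \<in> V" "v \<notin> cone V E" for v
    proof -
      obtain m where "\<phi> (gen V E v) = raag_class V E (pw v m)" "v \<notin> cone V E \<longrightarrow> m = 1"
        using zv_form[OF p v(1)] by blast
      then show ?thesis using v gen_pw by simp
    qed
    have "\<phi> (gen V E v) = gen V E v" if v: "v \<in> V" for v
    proof (cases "v \<in> cone V E")
      case False then show ?thesis using nc v by blast
    next
      case True
      have xv: "x \<noteq> v" using x True by auto
      have gx: "gen V E x \<in> carrier (RAAG V E)" and gv: "gen V E v \<in> carrier (RAAG V E)"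
        by (simp_all add: gen_carrier x v)
      have px: "\<phi> (gen V E x) = gen V E x" using nc x by blast
      have t: "tau x v (gen V E x) = gen V E x \<otimes>\<^bsub>RAAG V E\<^esub> gen V E v"
        using tau_gen[OF x(1) True xv x(1)] by (simp add: tauf_def)
      have cc: "\<phi> (tau x v (gen V E x)) = tau x v (\<phi> (gen V E x))"
        using center_comm[OF p tau_auto[OF x(1) True xv] gx] .
      have e1: "\<phi> (tau x v (gen V E x)) = gen V E x \<otimes>\<^bsub>RAAG V E\<^esub> \<phi> (gen V E v)"
        unfolding t using ph.hom_mult[OF gx gv] px by simp
      have e2: "tau x v (\<phi> (gen V E x)) = gen V E x \<otimes>\<^bsub>RAAG V E\<^esub> gen V E v"
        unfolding px by (rule t)
      have pv: "\<phi> (gen V E v) \<in> carrier (RAAG V E)" using gv by simp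
      have "gen V E x \<otimes>\<^bsub>RAAG V E\<^esub> \<phi> (gen V E v) = gen V E x \<otimes>\<^bsub>RAAG V E\<^esub> gen V E v"
        using cc e1 e2 by simp
      then show ?thesis using G.l_cancel[OF _ pv gv gx] by blast
    qed
    then have "\<phi> = (\<lambda>x\<in>carrier (RAAG V E). x)" by (rule auto_eq_id[OF pa])
    then show "\<phi> \<in> {\<one>\<^bsub>AutoGroup (RAAG V E)\<^esub>}" by (simp add: one_Auto)
  qed
qed

end

context sraag begin

lemma complete_comm:
  assumes cV: "cone V E = V" and x: "x \<in> carrier (RAAG V E)" and y: "y \<in> carrier (RAAG V E)"
  shows "x \<otimes>\<^bsub>RAAG V E\<^esub> y = y \<otimes>\<^bsub>RAAG V E\<^esub> x"
proof -
  interpret G: group "RAAG V E" by (rule G)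
  obtain w where w: "w \<in> raag_word V" "x = raag_class V E w" using x by (auto simp: carrier_RAAG)
  have "raag_class V E w \<otimes>\<^bsub>RAAG V E\<^esub> y = y \<otimes>\<^bsub>RAAG V E\<^esub> raag_class V E w" using w(1)
  proof (induction w)
    case Nil then show ?case using y by (simp flip: one_RAAG)
  next
    case (Cons a w)
    obtain u b where a: "a = (u, b)" by (cases a)
    have uV: "u \<in> V" and wV: "w \<in> raag_word V" using Cons.prems a by auto
    have gu: "gen V E u \<in> carrier (RAAG V E)" using gen_carrier[OF uV] .
    have uc: "u \<in> cone V E" using cV uV by simp
    have cu: "gen V E u \<otimes>\<^bsub>RAAG V E\<^esub> y = y \<otimes>\<^bsub>RAAG V E\<^esub> gen V E u" using gen_central[OF uc y] .
    have ca: "raag_class V E [a] \<otimes>\<^bsub>RAAG V E\<^esub> y = y \<otimes>\<^bsub>RAAG V E\<^esub> raag_class V E [a]"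
      using cu G.comm_inv_both(1)[OF gu y cu] a uV by (simp add: class_letter)
    have c1: "raag_class V E [a] \<in> carrier (RAAG V E)" using uV a by (auto simp: carrier_RAAG)
    have c2: "raag_class V E w \<in> carrier (RAAG V E)" using wV by (auto simp: carrier_RAAG)
    have eq: "raag_class V E (a # w) = raag_class V E [a] \<otimes>\<^bsub>RAAG V E\<^esub> raag_class V E w"
      using mult_RAAG[of "[a]" V w E] uV a wV by simp
    have "y \<otimes>\<^bsub>RAAG V E\<^esub> (raag_class V E [a] \<otimes>\<^bsub>RAAG V E\<^esub> raag_class V E w)
        = (raag_class V E [a] \<otimes>\<^bsub>RAAG V E\<^esub> raag_class V E w) \<otimes>\<^bsub>RAAG V E\<^esub> y"
      using G.comm_mult_right[OF y c1 c2 ca[symmetric] Cons.IH[OF wV, symmetric]] .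
    then show ?case unfolding eq by simp
  qed
  then show ?thesis using w by simp
qed

lemma inv_hom_complete:
  assumes cV: "cone V E = V"
  shows "(\<lambda>x. inv\<^bsub>RAAG V E\<^esub> x) \<in> hom (RAAG V E) (RAAG V E)"
proof -
  interpret G: group "RAAG V E" by (rule G)
  show ?thesis
  proof (rule homI)
    fix x y assume xy: "x \<in> carrier (RAAG V E)" "y \<in> carrier (RAAG V E)"
    then show "inv\<^bsub>RAAG V E\<^esub> (x \<otimes>\<^bsub>RAAG V E\<^esub> y) = inv\<^bsub>RAAG V E\<^esub> x \<otimes>\<^bsub>RAAG V E\<^esub> inv\<^bsub>RAAG V E\<^esub> y"
      using complete_comm[OF cV] by (simp add: G.inv_mult_group)
  qed simp
qed

lemma ex_pw: "v \<in> V \<Longrightarrow> ex u (raag_class V E (pw v m)) = (if u = v then m else 0)"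
  by (simp add: ex_class cnt_pw)

lemma ex_scale_hom: "(\<lambda>y. m * ex u y) \<in> hom (RAAG V E) integer_group"
  by (rule homI) (auto simp: hom_mult[OF ex_hom] algebra_simps)

theorem center_complete:
  assumes cV: "cone V E = V"
  shows "group_center (AutoGroup (RAAG V E)) \<subseteq>
           {(\<lambda>x\<in>carrier (RAAG V E). x), (\<lambda>x\<in>carrier (RAAG V E). inv\<^bsub>RAAG V E\<^esub> x)}"
proof
  interpret G: group "RAAG V E" by (rule G)
  fix \<phi> assume p: "\<phi> \<in> group_center (AutoGroup (RAAG V E))"
  have pa: "\<phi> \<in> auto (RAAG V E)" using center_auto[OF p] .
  interpret ph: group_hom "RAAG V E" "RAAG V E" \<phi>
    by (rule group_hom.intro[OF G G]) (simp add: group_hom_axioms_def auto_hom[OF pa])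
  show "\<phi> \<in> {(\<lambda>x\<in>carrier (RAAG V E). x), (\<lambda>x\<in>carrier (RAAG V E). inv\<^bsub>RAAG V E\<^esub> x)}"
  proof (cases "V = {}")
    case True
    then have "\<phi> = (\<lambda>x\<in>carrier (RAAG V E). x)" using auto_eq_id[OF pa] by blast
    then show ?thesis by simp
  next
    case False
    then obtain v0 where v0: "v0 \<in> V" by blast
    define M where "M v = (SOME m. \<phi> (gen V E v) = raag_class V E (pw v m))" for v
    have M: "\<phi> (gen V E v) = raag_class V E (pw v (M v))" if v: "v \<in> V" for v
    proof -
      have "\<exists>m. \<phi> (gen V E v) = raag_class V E (pw v m)" using zv_form[OF p v] by blast
      then show ?thesis unfolding M_def by (rule someI_ex)
    qed
    have Meq: "M v = M v0" if v: "v \<in> V" for v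
    proof (cases "v = v0")
      case True then show ?thesis by simp
    next
      case False
      have c0: "v0 \<in> cone V E" using cV v0 by simp
      have gv: "gen V E v \<in> carrier (RAAG V E)" and g0: "gen V E v0 \<in> carrier (RAAG V E)"
        by (simp_all add: gen_carrier v v0)
      have pv: "raag_class V E (pw v (M v)) \<in> carrier (RAAG V E)"
        using v by (simp add: carrier_RAAG)
      have p0: "raag_class V E (pw v0 (M v0)) \<in> carrier (RAAG V E)"
        using v0 by (simp add: carrier_RAAG)
      have t: "tau v v0 (gen V E v) = gen V E v \<otimes>\<^bsub>RAAG V E\<^esub> gen V E v0"
        using tau_gen[OF v c0 False v] by (simp add: tauf_def)
      have cc: "\<phi> (tau v v0 (gen V E v)) = tau v v0 (\<phi> (gen V E v))"
        using center_comm[OF p tau_auto[OF v c0 False] gv] .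
      have "ex v0 (\<phi> (tau v v0 (gen V E v))) = M v0"
        unfolding t using ph.hom_mult[OF gv g0] M[OF v] M[OF v0] hom_mult[OF ex_hom pv p0]
          ex_pw[OF v] ex_pw[OF v0] False by simp
      moreover have "ex v0 (tau v v0 (\<phi> (gen V E v))) = M v"
        unfolding M[OF v] using ex_tau[OF v c0 False pv] ex_pw[OF v] False by simp
      ultimately show ?thesis using cc by simp
    qed
    define m where "m = M v0"
    have Mm: "\<phi> (gen V E v) = raag_class V E (pw v m)" if v: "v \<in> V" for v
      using M[OF v] Meq[OF v] by (simp add: m_def)
    have g0: "gen V E v0 \<in> carrier (RAAG V E)" using gen_carrier[OF v0] .
    have "gen V E v0 \<in> \<phi> ` carrier (RAAG V E)" using auto_bij[OF pa] g0 by (simp add: bij_betw_def)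
    then obtain y where y: "y \<in> carrier (RAAG V E)" "gen V E v0 = \<phi> y" by auto
    have "(ex v0 \<circ> \<phi>) y = m * ex v0 y"
    proof (rule hom_eq_gens[OF group_integer_group hom_compose[OF auto_hom[OF pa] ex_hom] ex_scale_hom _ y(1)])
      fix u assume u: "u \<in> V"
      show "(ex v0 \<circ> \<phi>) (gen V E u) = m * ex v0 (gen V E u)"
        using Mm[OF u] ex_pw[OF u] ex_gen[OF u] by auto
    qed
    then have "m * ex v0 y = 1" using y(2) ex_gen[OF v0] by simp
    then have m: "m = 1 \<or> m = -1" by (rule pos_zmult_eq_1_iff_lemma)
    show ?thesis
    proof (cases "m = 1")
      case True
      have "\<phi> = (\<lambda>x\<in>carrier (RAAG V E). x)"
        using auto_eq_id[OF pa] Mm True gen_pw by simp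
      then show ?thesis by simp
    next
      case False
      then have m1: "m = -1" using m by simp
      have pinv: "\<phi> x = (\<lambda>x\<in>carrier (RAAG V E). inv\<^bsub>RAAG V E\<^esub> x) x" for x
      proof (cases "x \<in> carrier (RAAG V E)")
        case True
        have "\<phi> x = inv\<^bsub>RAAG V E\<^esub> x"
        proof (rule hom_eq_gens[OF G auto_hom[OF pa] inv_hom_complete[OF cV] _ True])
          fix v assume v: "v \<in> V"
          show "\<phi> (gen V E v) = inv\<^bsub>RAAG V E\<^esub> gen V E v"
            using Mm[OF v] m1 class_neg[OF v] by (simp add: pw_mone)
        qed
        then show ?thesis using True by simp
      next
        case False
        then show ?thesis using auto_ext[OF pa] by (simp add: extensional_def)
      qed
      have "\<phi> = (\<lambda>x\<in>carrier (RAAG V E). inv\<^bsub>RAAG V E\<^esub> x)" by (rule ext) (rule pinv)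
      then show ?thesis by simp
    qed
  qed
qed

theorem iso_complete:
  assumes cV: "cone V E = V" and fin: "finite V"
  shows "\<exists>S :: nat set. RAAG V E \<cong> free_Abelian_group S"
proof -
  interpret G: group "RAAG V E" by (rule G)
  interpret CG: comm_group "RAAG V E"
    by (rule G.group_comm_groupI) (use complete_comm[OF cV] in auto)
  have rh: "raag_hom V E (free_Abelian_group V) frag_of"
  proof (rule raag_hom.intro)
    show "group (free_Abelian_group V)" by simp
  next
    fix v assume "v \<in> V" then show "frag_of v \<in> carrier (free_Abelian_group V)" by simp
  next
    fix u v
    show "frag_of u \<otimes>\<^bsub>free_Abelian_group V\<^esub> frag_of v = frag_of v \<otimes>\<^bsub>free_Abelian_group V\<^esub> frag_of u"
      by (simp only: mult_free_Abelian_group add.commute)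
  qed
  define \<theta> where "\<theta> = rext (free_Abelian_group V) frag_of"
  have th: "\<theta> \<in> hom (RAAG V E) (free_Abelian_group V)" unfolding \<theta>_def by (rule raag_hom.rext_hom[OF rh])
  have thg: "\<theta> (gen V E v) = frag_of v" if "v \<in> V" for v
    unfolding \<theta>_def using raag_hom.rext_gen[OF rh that] .
  obtain \<kappa> where ka: "\<kappa> \<in> hom (free_Abelian_group V) (RAAG V E)"
    and kag: "\<And>v. v \<in> V \<Longrightarrow> \<kappa> (frag_of v) = gen V E v"
  proof -
    have "gen V E ` V \<subseteq> carrier (RAAG V E)" using gen_carrier[of _ V E] by blast
    from CG.free_Abelian_group_universal[OF this] show ?thesis using that by metis
  qed
  have kt: "\<kappa> (\<theta> x) = x" if x: "x \<in> carrier (RAAG V E)" for x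
    using hom_eq_gens[OF G hom_compose[OF th ka] id_hom_G _ x] thg kag by simp
  have tk: "\<theta> (\<kappa> y) = y" if y: "y \<in> carrier (free_Abelian_group V)" for y
  proof -
    have hc: "\<theta> \<circ> \<kappa> \<in> hom (free_Abelian_group V) (free_Abelian_group V)" by (rule hom_compose[OF ka th])
    have gh: "group_hom (free_Abelian_group V) (free_Abelian_group V) (\<theta> \<circ> \<kappa>)"
      by (rule group_hom.intro) (auto simp: group_hom_axioms_def hc)
    show ?thesis
    proof (rule free_Abelian_group_induct[of y V "\<lambda>y. \<theta> (\<kappa> y) = y"])
      show "Poly_Mapping.keys y \<subseteq> V" using y by simp
    next
      show "\<theta> (\<kappa> 0) = 0" using group_hom.hom_one[OF gh] by simp
    next
      fix a b assume ab: "Poly_Mapping.keys a \<subseteq> V" "Poly_Mapping.keys b \<subseteq> V" "\<theta> (\<kappa> a) = a" "\<theta> (\<kappa> b) = b"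
      then show "\<theta> (\<kappa> (a - b)) = a - b" using hom_frag_diff[OF hc ab(1,2)] by simp
    next
      fix a assume "a \<in> V" then show "\<theta> (\<kappa> (frag_of a)) = frag_of a" using kag thg by simp
    qed
  qed
  have "bij_betw \<theta> (carrier (RAAG V E)) (carrier (free_Abelian_group V))"
    by (rule bij_betwI[where g = \<kappa>]) (use th ka kt tk in \<open>auto simp: hom_def\<close>)
  then have "RAAG V E \<cong> free_Abelian_group V"
    using th by (auto simp: is_iso_def iso_def)
  moreover have "free_Abelian_group V \<cong> free_Abelian_group {..<card V}"
  proof -
    have "V \<approx> {..<card V}" using eqpoll_iff_card[OF fin, of "{..<card V}"] by simp
    then show ?thesis using isomorphic_free_Abelian_groups by blast
  qed
  ultimately have "RAAG V E \<cong> free_Abelian_group {..<card V}" by (rule iso_trans)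
  then show ?thesis by blast
qed

end

theorem mainTheorem8:
  fixes V :: "'v set" and E :: "'v \<Rightarrow> 'v \<Rightarrow> bool"
  assumes "simplicial_graph V E"
  shows "finite (group_center (AutoGroup (RAAG V E)))
           \<and> card (group_center (AutoGroup (RAAG V E))) \<le> 2
           \<and> (\<not> (\<exists>S :: nat set. RAAG V E \<cong> free_Abelian_group S)
                \<longrightarrow> group_center (AutoGroup (RAAG V E)) = {\<one>\<^bsub>AutoGroup (RAAG V E)\<^esub>})"
proof -
  have sg: "finite V" "\<And>v w. E v w \<Longrightarrow> E w v" "\<And>v. \<not> E v v" "\<And>v w. E v w \<Longrightarrow> v \<in> V"
    using assms unfolding simplicial_graph_def by blast+
  interpret sraag E V
    by unfold_locales (use sg in blast)+
  show ?thesis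
  proof (cases "\<exists>x\<in>V. x \<notin> cone V E")
    case True
    then obtain x where x: "x \<in> V" "x \<notin> cone V E" by blast
    have c: "group_center (AutoGroup (RAAG V E)) = {\<one>\<^bsub>AutoGroup (RAAG V E)\<^esub>}"
      by (rule center_noncomplete[OF x])
    show ?thesis unfolding c by simp
  next
    case False
    then have cV: "cone V E = V" by (auto simp: cone_def)
    have sub: "group_center (AutoGroup (RAAG V E)) \<subseteq>
           {(\<lambda>x\<in>carrier (RAAG V E). x), (\<lambda>x\<in>carrier (RAAG V E). inv\<^bsub>RAAG V E\<^esub> x)}"
      by (rule center_complete[OF cV])
    have fin: "finite (group_center (AutoGroup (RAAG V E)))" using finite_subset[OF sub] by simp
    have "card (group_center (AutoGroup (RAAG V E))) \<le> card {(\<lambda>x\<in>carrier (RAAG V E). x), (\<lambda>x\<in>carrier (RAAG V E). inv\<^bsub>RAAG V E\<^esub> x)}"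
      by (rule card_mono[OF _ sub]) simp
    also have "\<dots> \<le> 2" by (simp add: card_insert_if)
    finally have "card (group_center (AutoGroup (RAAG V E))) \<le> 2" .
    moreover have "\<exists>S :: nat set. RAAG V E \<cong> free_Abelian_group S" by (rule iso_complete[OF cV sg(1)])
    ultimately show ?thesis using fin by blast
  qed
qed


end
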